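(* Let $\mathcal A$ be an arrangement of $d$ lines in $\mathbb P^2$ and let $m$ be the multiplicity of one of its intersection points. (i) If $\mathcal A$ is free with exponents $d_1\le d_2$ and $m>d/2$, then $m=d_2+1$. (ii) If $\mathcal A$ is nearly free with exponents $d_1\le d_2$ and $m\ge d/2$, then $m=d_2$.
   Context: The multiplicity of an intersection point is the number of lines through it. Let $S=\mathbb C[x,y,z]$, $f$ the product of the linear forms of the lines, and $AR(f)=\{(a,b,c)\in S^3: af_x+bf_y+cf_z=0\}$. $\mathcal A$ is free with exponents $d_1\le d_2$ if $AR(f)$ is a free $S$-module with homogeneous basis of degrees $d_1,d_2$; it is nearly free with exponents $d_1\le d_2$ if $AR(f)$ has a minimal graded free resolution $0\to S(-d_2-1)\to S(-d_1)\oplus S(-d_2)^2\to AR(f)\to 0$ with $d_1+d_2=d$. *)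

theory Defs
  imports Complex_Main "HOL-Library.Poly_Mapping" "HOL-Library.Product_Plus"
begin

text \<open>S = C[x,y,z]: polynomials as finitely supported maps from exponent
triples (i,j,k) (standing for x^i y^j z^k) to complex coefficients.\<close>

type_synonym mon3 = "nat \<times> nat \<times> nat"
type_synonym S = "mon3 \<Rightarrow>\<^sub>0 complex"
type_synonym S3 = "S \<times> S \<times> S"

definition varX :: S where "varX = Poly_Mapping.single (1,0,0) 1"
definition varY :: S where "varY = Poly_Mapping.single (0,1,0) 1"
definition varZ :: S where "varZ = Poly_Mapping.single (0,0,1) 1"

definition const :: "complex \<Rightarrow> S" where "const c = Poly_Mapping.single (0,0,0) c"

definition dX :: "S \<Rightarrow> S" where
  "dX p = (\<Sum>m\<in>Poly_Mapping.keys p. case m of (i,j,k) \<Rightarrow>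
            Poly_Mapping.single (i - 1, j, k) (of_nat i * Poly_Mapping.lookup p m))"
definition dY :: "S \<Rightarrow> S" where
  "dY p = (\<Sum>m\<in>Poly_Mapping.keys p. case m of (i,j,k) \<Rightarrow>
            Poly_Mapping.single (i, j - 1, k) (of_nat j * Poly_Mapping.lookup p m))"
definition dZ :: "S \<Rightarrow> S" where
  "dZ p = (\<Sum>m\<in>Poly_Mapping.keys p. case m of (i,j,k) \<Rightarrow>
            Poly_Mapping.single (i, j, k - 1) (of_nat k * Poly_Mapping.lookup p m))"

text \<open>Homogeneity (the zero polynomial is homogeneous of every degree).\<close>
definition tdeg :: "mon3 \<Rightarrow> nat" where "tdeg m = (case m of (i,j,k) \<Rightarrow> i + j + k)"
definition homog :: "nat \<Rightarrow> S \<Rightarrow> bool" where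
  "homog n p \<longleftrightarrow> (\<forall>m\<in>Poly_Mapping.keys p. tdeg m = n)"
definition homog3 :: "nat \<Rightarrow> S3 \<Rightarrow> bool" where
  "homog3 n r \<longleftrightarrow> (case r of (a,b,c) \<Rightarrow> homog n a \<and> homog n b \<and> homog n c)"

definition tsmul :: "S \<Rightarrow> S3 \<Rightarrow> S3" where
  "tsmul h r = (case r of (a,b,c) \<Rightarrow> (h*a, h*b, h*c))"
definition tadd :: "S3 \<Rightarrow> S3 \<Rightarrow> S3" where
  "tadd r s = (case r of (a,b,c) \<Rightarrow> case s of (a',b',c') \<Rightarrow> (a+a', b+b', c+c'))"

text \<open>Lines: a line is given by a nonzero linear form (a,b,c), i.e. a x + b y + c z.\<close>
type_synonym lform = "complex \<times> complex \<times> complex"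

definition lin_poly :: "lform \<Rightarrow> S" where
  "lin_poly l = (case l of (a,b,c) \<Rightarrow> const a * varX + const b * varY + const c * varZ)"

definition lin_eval :: "lform \<Rightarrow> lform \<Rightarrow> complex" where
  "lin_eval l p = (case l of (a,b,c) \<Rightarrow> case p of (x,y,z) \<Rightarrow> a*x + b*y + c*z)"

definition proportional :: "lform \<Rightarrow> lform \<Rightarrow> bool" where
  "proportional l l' \<longleftrightarrow> (\<exists>t::complex. t \<noteq> 0 \<and> l' = (t * fst l, t * fst (snd l), t * snd (snd l)))"

definition arrangement :: "lform list \<Rightarrow> bool" where
  "arrangement L \<longleftrightarrow> (\<forall>l\<in>set L. l \<noteq> (0,0,0)) \<and>
     (\<forall>i<length L. \<forall>j<length L. i \<noteq> j \<longrightarrow> \<not> proportional (L!i) (L!j))"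

definition defpoly :: "lform list \<Rightarrow> S" where
  "defpoly L = (\<Prod>l\<leftarrow>L. lin_poly l)"

text \<open>Multiplicity of a point p (nonzero vector representing a point of P^2).\<close>
definition mult_pt :: "lform list \<Rightarrow> lform \<Rightarrow> nat" where
  "mult_pt L p = card {i. i < length L \<and> lin_eval (L!i) p = 0}"

definition intersection_point :: "lform list \<Rightarrow> lform \<Rightarrow> bool" where
  "intersection_point L p \<longleftrightarrow> p \<noteq> (0,0,0) \<and> mult_pt L p \<ge> 2"

definition AR :: "S \<Rightarrow> S3 set" where
  "AR f = {(a,b,c). a * dX f + b * dY f + c * dZ f = 0}"

definition is_free :: "lform list \<Rightarrow> nat \<Rightarrow> nat \<Rightarrow> bool" where
  "is_free L d1 d2 \<longleftrightarrow> (let f = defpoly L in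
     \<exists>r1 r2. homog3 d1 r1 \<and> homog3 d2 r2 \<and> r1 \<in> AR f \<and> r2 \<in> AR f \<and>
       (\<forall>r\<in>AR f. \<exists>!pq. r = tadd (tsmul (fst pq) r1) (tsmul (snd pq) r2)))"

text \<open>Nearly free with exponents d1, d2: minimal graded free resolution
0 -> S(-d2-1) -> S(-d1) + S(-d2)^2 -> AR(f) -> 0 with d1 + d2 = d.
The generators r1, r2, r3 of degrees d1, d2, d2 generate AR(f); the module of
relations among them is free of rank one, generated by a homogeneous relation
(u,v,w) of degree d2+1 (so deg u = d2+1-d1, deg v = deg w = 1).  Minimality is
automatic since these degrees are positive.\<close>
definition is_nearly_free :: "lform list \<Rightarrow> nat \<Rightarrow> nat \<Rightarrow> bool" where
  "is_nearly_free L d1 d2 \<longleftrightarrow> d1 + d2 = length L \<and> (let f = defpoly L in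
     \<exists>r1 r2 r3. homog3 d1 r1 \<and> homog3 d2 r2 \<and> homog3 d2 r3 \<and>
       r1 \<in> AR f \<and> r2 \<in> AR f \<and> r3 \<in> AR f \<and>
       (\<forall>r\<in>AR f. \<exists>p q s. r = tadd (tsmul p r1) (tadd (tsmul q r2) (tsmul s r3))) \<and>
       (\<exists>u v w. homog (d2 + 1 - d1) u \<and> homog 1 v \<and> homog 1 w \<and>
          (\<forall>p q s. tadd (tsmul p r1) (tadd (tsmul q r2) (tsmul s r3)) = (0,0,0) \<longleftrightarrow>
                     (\<exists>h. (p,q,s) = (h*u, h*v, h*w))) \<and>
          (\<forall>h h'. (h*u, h*v, h*w) = (h'*u, h'*v, h'*w) \<longrightarrow> h = h')))"

end

theory Submission
  imports Defs "HOL-Computational_Algebra.Polynomial_Factorial" "HOL-Computational_Algebra.Field_as_Ring"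
begin


lemma S_expand: "(p::'a \<Rightarrow>\<^sub>0 'b::comm_monoid_add) = (\<Sum>m\<in>Poly_Mapping.keys p. Poly_Mapping.single m (Poly_Mapping.lookup p m))"
proof (rule poly_mapping_eqI)
  fix k
  show "Poly_Mapping.lookup p k = Poly_Mapping.lookup (\<Sum>m\<in>Poly_Mapping.keys p. Poly_Mapping.single m (Poly_Mapping.lookup p m)) k"
    by (cases "k \<in> Poly_Mapping.keys p") (auto simp: lookup_sum lookup_single when_def in_keys_iff)
qed

definition lin :: "('a \<Rightarrow> 'b::zero \<Rightarrow> 'c::comm_monoid_add) \<Rightarrow> ('a \<Rightarrow>\<^sub>0 'b) \<Rightarrow> 'c" where
  "lin F p = (\<Sum>m\<in>Poly_Mapping.keys p. F m (Poly_Mapping.lookup p m))"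

locale addF =
  fixes F :: "'a \<Rightarrow> 'b::comm_monoid_add \<Rightarrow> 'c::comm_monoid_add"
  assumes F0: "F m 0 = 0" and Fadd: "F m (a + b) = F m a + F m b"
begin

lemma lin_superset: "finite K \<Longrightarrow> Poly_Mapping.keys p \<subseteq> K \<Longrightarrow> lin F p = (\<Sum>m\<in>K. F m (Poly_Mapping.lookup p m))"
  unfolding lin_def by (rule sum.mono_neutral_left) (auto simp: in_keys_iff F0)

lemma lin_add: "lin F (p + q) = lin F p + lin F q"
proof -
  let ?K = "Poly_Mapping.keys p \<union> Poly_Mapping.keys q"
  have "lin F (p+q) = (\<Sum>m\<in>?K. F m (Poly_Mapping.lookup (p+q) m))"
    by (rule lin_superset) (auto dest: subsetD[OF keys_add])
  also have "\<dots> = (\<Sum>m\<in>?K. F m (Poly_Mapping.lookup p m)) + (\<Sum>m\<in>?K. F m (Poly_Mapping.lookup q m))"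
    by (simp add: lookup_add Fadd sum.distrib)
  also have "\<dots> = lin F p + lin F q"
    using lin_superset[of ?K p] lin_superset[of ?K q] by simp
  finally show ?thesis .
qed

lemma lin_zero[simp]: "lin F 0 = 0" by (simp add: lin_def)

lemma lin_single[simp]: "lin F (Poly_Mapping.single m c) = F m c"
  by (cases "c = 0") (auto simp: lin_def F0)

lemma lin_sum: "lin F (sum f A) = (\<Sum>x\<in>A. lin F (f x))"
  by (induction A rule: infinite_finite_induct) (auto simp: lin_add)

lemma lin_expand: "lin F p = (\<Sum>m\<in>Poly_Mapping.keys p. lin F (Poly_Mapping.single m (Poly_Mapping.lookup p m)))"
  by (simp only: lin_single) (simp add: lin_def)
end

lemma mult_expand: "(p::'a::comm_monoid_add \<Rightarrow>\<^sub>0 'b::comm_semiring_1) * q = (\<Sum>a\<in>Poly_Mapping.keys p. \<Sum>b\<in>Poly_Mapping.keys q.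
     Poly_Mapping.single a (Poly_Mapping.lookup p a) * Poly_Mapping.single b (Poly_Mapping.lookup q b))"
proof -
  have "p * q = (\<Sum>a\<in>Poly_Mapping.keys p. Poly_Mapping.single a (Poly_Mapping.lookup p a)) *
       (\<Sum>b\<in>Poly_Mapping.keys q. Poly_Mapping.single b (Poly_Mapping.lookup q b))"
    by (subst S_expand[of p], subst S_expand[of q]) (rule refl)
  then show ?thesis by (simp add: sum_product)
qed

definition Fx :: "mon3 \<Rightarrow> complex \<Rightarrow> S" where
  "Fx m c = (case m of (i,j,k) \<Rightarrow> Poly_Mapping.single (i - 1, j, k) (of_nat i * c))"
definition Fy :: "mon3 \<Rightarrow> complex \<Rightarrow> S" where
  "Fy m c = (case m of (i,j,k) \<Rightarrow> Poly_Mapping.single (i, j - 1, k) (of_nat j * c))"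
definition Fz :: "mon3 \<Rightarrow> complex \<Rightarrow> S" where
  "Fz m c = (case m of (i,j,k) \<Rightarrow> Poly_Mapping.single (i, j, k - 1) (of_nat k * c))"

interpretation Fx: addF Fx by standard (auto simp: Fx_def split: prod.splits simp: distrib_left single_add)
interpretation Fy: addF Fy by standard (auto simp: Fy_def split: prod.splits simp: distrib_left single_add)
interpretation Fz: addF Fz by standard (auto simp: Fz_def split: prod.splits simp: distrib_left single_add)

lemma dX_lin: "dX p = lin Fx p" unfolding dX_def lin_def Fx_def by simp
lemma dY_lin: "dY p = lin Fy p" unfolding dY_def lin_def Fy_def by simp
lemma dZ_lin: "dZ p = lin Fz p" unfolding dZ_def lin_def Fz_def by simp

lemma dX_add: "dX (p + q) = dX p + dX q" by (simp add: dX_lin Fx.lin_add)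
lemma dY_add: "dY (p + q) = dY p + dY q" by (simp add: dY_lin Fy.lin_add)
lemma dZ_add: "dZ (p + q) = dZ p + dZ q" by (simp add: dZ_lin Fz.lin_add)

lemma plus_triple: "((a::nat),(b::nat),(c::nat)) + (a',b',c') = (a+a',b+b',c+c')"
  by (simp add: plus_prod_def)

lemma Fx_leib: "Fx (a + b) (c * e) = Fx a c * Poly_Mapping.single b e + Poly_Mapping.single a c * Fx b e"
proof -
  obtain i j k where a: "a = (i,j,k)" by (cases a) auto
  obtain i' j' k' where b: "b = (i',j',k')" by (cases b) auto
  show ?thesis
    by (cases "i = 0"; cases "i' = 0")
       (auto simp: a b Fx_def plus_triple mult_single algebra_simps single_add[symmetric])
qed
lemma Fy_leib: "Fy (a + b) (c * e) = Fy a c * Poly_Mapping.single b e + Poly_Mapping.single a c * Fy b e"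
proof -
  obtain i j k where a: "a = (i,j,k)" by (cases a) auto
  obtain i' j' k' where b: "b = (i',j',k')" by (cases b) auto
  show ?thesis
    by (cases "j = 0"; cases "j' = 0")
       (auto simp: a b Fy_def plus_triple mult_single algebra_simps single_add[symmetric])
qed
lemma Fz_leib: "Fz (a + b) (c * e) = Fz a c * Poly_Mapping.single b e + Poly_Mapping.single a c * Fz b e"
proof -
  obtain i j k where a: "a = (i,j,k)" by (cases a) auto
  obtain i' j' k' where b: "b = (i',j',k')" by (cases b) auto
  show ?thesis
    by (cases "k = 0"; cases "k' = 0")
       (auto simp: a b Fz_def plus_triple mult_single algebra_simps single_add[symmetric])
qed

lemma leib_general:
  fixes G :: "mon3 \<Rightarrow> complex \<Rightarrow> S"
  assumes "addF G"
    and leib: "\<And>a b c e. G (a + b) (c * e) = G a c * Poly_Mapping.single b e + Poly_Mapping.single a c * G b e"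
  shows "lin G (p * q) = lin G p * q + p * lin G q"
proof -
  interpret G: addF G by fact
  have "lin G (p * q) = (\<Sum>a\<in>Poly_Mapping.keys p. \<Sum>b\<in>Poly_Mapping.keys q.
     lin G (Poly_Mapping.single a (Poly_Mapping.lookup p a) * Poly_Mapping.single b (Poly_Mapping.lookup q b)))"
    by (subst mult_expand) (simp add: G.lin_sum)
  also have "\<dots> = (\<Sum>a\<in>Poly_Mapping.keys p. \<Sum>b\<in>Poly_Mapping.keys q.
     G a (Poly_Mapping.lookup p a) * Poly_Mapping.single b (Poly_Mapping.lookup q b) +
     Poly_Mapping.single a (Poly_Mapping.lookup p a) * G b (Poly_Mapping.lookup q b))"
    by (simp add: mult_single leib)
  also have "\<dots> = (\<Sum>a\<in>Poly_Mapping.keys p. G a (Poly_Mapping.lookup p a)) *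
        (\<Sum>b\<in>Poly_Mapping.keys q. Poly_Mapping.single b (Poly_Mapping.lookup q b)) +
      (\<Sum>a\<in>Poly_Mapping.keys p. Poly_Mapping.single a (Poly_Mapping.lookup p a)) *
        (\<Sum>b\<in>Poly_Mapping.keys q. G b (Poly_Mapping.lookup q b))"
    by (simp add: sum.distrib sum_product)
  also have "\<dots> = lin G p * q + p * lin G q"
    by (simp add: lin_def flip: S_expand)
  finally show ?thesis .
qed

lemma dX_mult: "dX (p * q) = dX p * q + p * dX q"
  unfolding dX_lin by (rule leib_general[OF Fx.addF_axioms Fx_leib])
lemma dY_mult: "dY (p * q) = dY p * q + p * dY q"
  unfolding dY_lin by (rule leib_general[OF Fy.addF_axioms Fy_leib])
lemma dZ_mult: "dZ (p * q) = dZ p * q + p * dZ q"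
  unfolding dZ_lin by (rule leib_general[OF Fz.addF_axioms Fz_leib])


type_synonym R = "complex poly poly poly"

definition mono3 :: "mon3 \<Rightarrow> complex \<Rightarrow> R" where
  "mono3 m c = (case m of (i,j,k) \<Rightarrow> monom (monom (monom c i) j) k)"

interpretation M3: addF mono3 by standard (auto simp: mono3_def split: prod.splits simp: add_monom)

definition phi :: "S \<Rightarrow> R" where "phi = lin mono3"

lemma phi_add: "phi (p + q) = phi p + phi q" by (simp add: phi_def M3.lin_add)
lemma phi_single: "phi (Poly_Mapping.single m c) = mono3 m c" by (simp add: phi_def)
lemma phi_0[simp]: "phi 0 = 0" by (simp add: phi_def)

lemma mono3_mult: "mono3 (a + b) (c * e) = mono3 a c * mono3 b e"
  by (cases a; cases b) (simp add: mono3_def plus_triple mult_monom)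

lemma phi_mult: "phi (p * q) = phi p * phi q"
proof -
  have "phi (p * q) = (\<Sum>a\<in>Poly_Mapping.keys p. \<Sum>b\<in>Poly_Mapping.keys q.
     phi (Poly_Mapping.single a (Poly_Mapping.lookup p a) * Poly_Mapping.single b (Poly_Mapping.lookup q b)))"
    by (subst mult_expand) (simp add: phi_def M3.lin_sum)
  also have "\<dots> = (\<Sum>a\<in>Poly_Mapping.keys p. \<Sum>b\<in>Poly_Mapping.keys q.
     mono3 a (Poly_Mapping.lookup p a) * mono3 b (Poly_Mapping.lookup q b))"
    by (simp add: mult_single phi_single mono3_mult)
  also have "\<dots> = phi p * phi q"
    by (simp add: phi_def lin_def sum_product)
  finally show ?thesis .
qed

lemma phi_1: "phi 1 = 1"
proof -
  have "(1::S) = Poly_Mapping.single 0 1" by simp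
  also have "(0::mon3) = (0,0,0)" by (simp add: zero_prod_def)
  finally have "phi 1 = phi (Poly_Mapping.single (0,0,0) 1)" by simp
  also have "\<dots> = 1" by (simp only: phi_single) (simp add: mono3_def)
  finally show ?thesis .
qed

lemma phi_uminus: "phi (- p) = - phi p"
proof -
  have "phi p + phi (-p) = 0" using phi_add[of p "-p"] by simp
  then show ?thesis by (metis add.inverse_unique)
qed

lemma phi_diff: "phi (p - q) = phi p - phi q"
  using phi_add[of p "-q"] phi_uminus[of q] by simp

lemma coeff_phi: "coeff (coeff (coeff (phi p) k) j) i = Poly_Mapping.lookup p (i,j,k)"
proof -
  have "coeff (coeff (coeff (phi p) k) j) i =
      (\<Sum>m\<in>Poly_Mapping.keys p. coeff (coeff (coeff (mono3 m (Poly_Mapping.lookup p m)) k) j) i)"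
    by (simp add: phi_def lin_def coeff_sum)
  also have "\<dots> = (\<Sum>m\<in>Poly_Mapping.keys p. if m = (i,j,k) then Poly_Mapping.lookup p m else 0)"
    by (rule sum.cong) (auto simp: mono3_def coeff_monom split: prod.splits)
  also have "\<dots> = Poly_Mapping.lookup p (i,j,k)"
    by (auto simp: in_keys_iff)
  finally show ?thesis .
qed

lemma phi_inj: "phi p = phi q \<Longrightarrow> p = q"
proof (rule poly_mapping_eqI)
  fix m :: mon3 assume "phi p = phi q"
  obtain i j k where "m = (i,j,k)" by (cases m) auto
  then show "Poly_Mapping.lookup p m = Poly_Mapping.lookup q m"
    using coeff_phi[of p k j i] coeff_phi[of q k j i] \<open>phi p = phi q\<close> by simp
qed

lemma phi_sum: "phi (sum f A) = (\<Sum>x\<in>A. phi (f x))" by (simp add: phi_def M3.lin_sum)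

lemma phi_surj: "\<exists>s. phi s = P"
proof -
  let ?c = "\<lambda>i j k. coeff (coeff (coeff P k) j) i"
  let ?s = "\<Sum>k\<le>degree P. \<Sum>j\<le>degree (coeff P k). \<Sum>i\<le>degree (coeff (coeff P k) j).
               Poly_Mapping.single (i,j,k) (?c i j k)"
  have "phi ?s = (\<Sum>k\<le>degree P. \<Sum>j\<le>degree (coeff P k). \<Sum>i\<le>degree (coeff (coeff P k) j).
               monom (monom (monom (?c i j k) i) j) k)"
    by (simp add: phi_sum phi_single mono3_def)
  also have "\<dots> = (\<Sum>k\<le>degree P. monom (\<Sum>j\<le>degree (coeff P k). monom (\<Sum>i\<le>degree (coeff (coeff P k) j).
               monom (?c i j k) i) j) k)"
    by (rule sum.cong[OF refl], subst monom_sum, rule sum.cong[OF refl], subst monom_sum, subst monom_sum, rule refl)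
  also have "\<dots> = P" by (simp only: poly_as_sum_of_monoms)
  finally show ?thesis by blast
qed

lemma S_no_zd: "(a::S) * b = 0 \<Longrightarrow> a = 0 \<or> b = 0"
proof -
  assume "a * b = 0"
  then have "phi a * phi b = 0" using phi_mult[of a b] by simp
  then have "phi a = phi 0 \<or> phi b = phi 0" by simp
  then show ?thesis using phi_inj by blast
qed

lemma S_mult_eq_0_iff[simp]: "(a::S) * b = 0 \<longleftrightarrow> a = 0 \<or> b = 0"
  using S_no_zd by auto

lemma S_cancel: "(a::S) \<noteq> 0 \<Longrightarrow> a * b = a * c \<Longrightarrow> b = c"
proof -
  assume "a \<noteq> 0" "a * b = a * c"
  then have "a * (b - c) = 0" by (simp add: right_diff_distrib)
  then show "b = c" using S_no_zd \<open>a \<noteq> 0\<close> by simp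
qed

lemma phi_dvd: "phi a dvd phi b \<longleftrightarrow> a dvd b"
proof
  assume "phi a dvd phi b"
  then obtain C where "phi b = phi a * C" by (auto elim: dvdE)
  moreover obtain c where "phi c = C" using phi_surj by blast
  ultimately have "phi b = phi (a * c)" by (simp add: phi_mult)
  then have "b = a * c" by (rule phi_inj)
  then show "a dvd b" by simp
next
  assume "a dvd b" then show "phi a dvd phi b" by (auto simp: phi_mult elim!: dvdE)
qed


definition Hk :: "nat \<Rightarrow> mon3 \<Rightarrow> complex \<Rightarrow> S" where
  "Hk k m c = (if tdeg m = k then Poly_Mapping.single m c else 0)"

interpretation Hk: addF "Hk k" by standard (auto simp: Hk_def single_add)

definition hc :: "nat \<Rightarrow> S \<Rightarrow> S" where "hc k = lin (Hk k)"

lemma hc_add: "hc k (p + q) = hc k p + hc k q" by (simp add: hc_def Hk.lin_add)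
lemma hc_0[simp]: "hc k 0 = 0" by (simp add: hc_def)
lemma hc_uminus: "hc k (- p) = - hc k p"
proof -
  have "hc k p + hc k (-p) = 0" using hc_add[of k p "-p"] by simp
  then show ?thesis by (metis add.inverse_unique)
qed
lemma hc_diff: "hc k (p - q) = hc k p - hc k q"
  using hc_add[of k p "-q"] hc_uminus[of k q] by simp

lemma tdeg_add: "tdeg (a + b) = tdeg a + tdeg b"
  by (cases a; cases b) (simp add: tdeg_def plus_triple)

lemma homog_0[simp]: "homog k 0" by (simp add: homog_def)

lemma homog_add: "homog k p \<Longrightarrow> homog k q \<Longrightarrow> homog k (p + q)"
  unfolding homog_def using keys_add[of p q] by auto

lemma homog_uminus: "homog k p \<Longrightarrow> homog k (- p)"
  unfolding homog_def by (simp add: keys_minus)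

lemma homog_diff: "homog k p \<Longrightarrow> homog k q \<Longrightarrow> homog k (p - q)"
  using homog_add[of k p "-q"] homog_uminus[of k q] by simp

lemma homog_mult: "homog a p \<Longrightarrow> homog b q \<Longrightarrow> homog (a + b) (p * q)"
proof -
  assume a: "homog a p" "homog b q"
  show ?thesis unfolding homog_def
  proof
    fix m assume "m \<in> Poly_Mapping.keys (p * q)"
    then obtain x y where "m = x + y" "x \<in> Poly_Mapping.keys p" "y \<in> Poly_Mapping.keys q"
      using keys_mult[of p q] by auto
    then show "tdeg m = a + b" using a by (simp add: homog_def tdeg_add)
  qed
qed

lemma homog_single: "tdeg m = k \<Longrightarrow> homog k (Poly_Mapping.single m c)"
  by (simp add: homog_def)

lemma homog_sum: "(\<And>x. x \<in> A \<Longrightarrow> homog k (f x)) \<Longrightarrow> homog k (sum f A)"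
  by (induction A rule: infinite_finite_induct) (auto intro: homog_add)

lemma homog_hc: "homog k (hc k p)"
  unfolding hc_def lin_def Hk_def by (rule homog_sum) (auto simp: homog_single)

lemma hc_homog_same: "homog k p \<Longrightarrow> hc k p = p"
  unfolding hc_def lin_def Hk_def homog_def by (subst (2) S_expand) (rule sum.cong, auto)

lemma hc_homog_other: "homog j p \<Longrightarrow> j \<noteq> k \<Longrightarrow> hc k p = 0"
  unfolding hc_def lin_def Hk_def homog_def by (rule sum.neutral) auto

lemma hc_single: "hc k (Poly_Mapping.single m c) = (if tdeg m = k then Poly_Mapping.single m c else 0)"
  by (simp add: hc_def Hk_def)

lemma hc_sum: "hc k (sum f A) = (\<Sum>x\<in>A. hc k (f x))" by (simp add: hc_def Hk.lin_sum)

lemma hc_mult_homog: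
  assumes "homog e r"
  shows "hc k (A * r) = (if e \<le> k then hc (k - e) A * r else 0)"
proof -
  have key: "\<And>b. b \<in> Poly_Mapping.keys r \<Longrightarrow> tdeg b = e" using assms by (simp add: homog_def)
  have "hc k (A * r) = (\<Sum>a\<in>Poly_Mapping.keys A. \<Sum>b\<in>Poly_Mapping.keys r.
     hc k (Poly_Mapping.single a (Poly_Mapping.lookup A a) * Poly_Mapping.single b (Poly_Mapping.lookup r b)))"
    by (subst mult_expand) (simp add: hc_sum)
  also have "\<dots> = (\<Sum>a\<in>Poly_Mapping.keys A. \<Sum>b\<in>Poly_Mapping.keys r.
     (if e \<le> k then (if tdeg a = k - e then Poly_Mapping.single a (Poly_Mapping.lookup A a) else 0) else 0) *
        Poly_Mapping.single b (Poly_Mapping.lookup r b))"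
    by (intro sum.cong refl) (auto simp: mult_single hc_single tdeg_add key)
  also have "\<dots> = (if e \<le> k then (\<Sum>a\<in>Poly_Mapping.keys A. (if tdeg a = k - e then Poly_Mapping.single a (Poly_Mapping.lookup A a) else 0)) *
       (\<Sum>b\<in>Poly_Mapping.keys r. Poly_Mapping.single b (Poly_Mapping.lookup r b)) else 0)"
    by (cases "e \<le> k") (simp_all add: sum_product)
  also have "\<dots> = (if e \<le> k then hc (k - e) A * r else 0)"
    by (simp only: hc_def lin_def Hk_def flip: S_expand)
  finally show ?thesis .
qed

lemma homog_1: "homog 0 (1::S)"
  by (simp add: homog_def tdeg_def zero_prod_def)

lemma hc_0_1: "hc 0 (1::S) = 1"
  by (rule hc_homog_same[OF homog_1])

lemma homog_unit_deg:
  assumes "homog k u" "u * v = 1"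
  shows "k = 0"
proof (rule ccontr)
  assume "k \<noteq> 0"
  have "hc 0 (v * u) = 0" using hc_mult_homog[OF assms(1), of 0 v] \<open>k \<noteq> 0\<close> by simp
  then show False using assms(2) hc_0_1 by (simp add: mult.commute)
qed

lemma hc_0_const: "hc 0 w = const (Poly_Mapping.lookup w (0,0,0))"
proof -
  have "hc 0 w = (\<Sum>m\<in>Poly_Mapping.keys w. if m = (0,0,0) then Poly_Mapping.single m (Poly_Mapping.lookup w m) else 0)"
    unfolding hc_def lin_def Hk_def by (rule sum.cong) (auto simp: tdeg_def split: prod.splits)
  also have "\<dots> = const (Poly_Mapping.lookup w (0,0,0))"
    by (auto simp: const_def in_keys_iff)
  finally show ?thesis .
qed


lemma "irreducible (x::R) \<Longrightarrow> prime_elem x" by (simp add: prime_elem_iff_irreducible)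

lemma irr_deg1:
  fixes P :: "'a::{idom_divide,algebraic_semidom} poly"
  assumes "degree P = 1" "is_unit (lead_coeff P)"
  shows "irreducible P"
proof (rule irreducibleI)
  show "P \<noteq> 0" using assms by auto
  show "\<not> is_unit P" using assms by (auto simp: is_unit_poly_iff)
  fix u v assume uv: "P = u * v"
  then have nz: "u \<noteq> 0" "v \<noteq> 0" using \<open>P \<noteq> 0\<close> by auto
  then have "degree u + degree v = 1" using uv assms by (simp add: degree_mult_eq)
  then consider "degree u = 0" | "degree v = 0" by linarith
  then show "is_unit u \<or> is_unit v"
  proof cases
    case 1
    then obtain c where c: "u = [:c:]" by (auto elim: degree_eq_zeroE)
    have "lead_coeff P = c * lead_coeff v" using uv c by simp
    then have "is_unit c" using assms(2) by (metis dvd_triv_left dvd_unit_imp_unit)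
    then show ?thesis using c by (simp add: is_unit_const_poly_iff)
  next
    case 2
    then obtain c where c: "v = [:c:]" by (auto elim: degree_eq_zeroE)
    have "lead_coeff P = lead_coeff u * c" using uv c by simp
    then have "is_unit c" using assms(2) by (metis dvd_triv_right dvd_unit_imp_unit)
    then show ?thesis using c by (simp add: is_unit_const_poly_iff)
  qed
qed

lemma irr_const:
  fixes a :: "'a::{idom_divide,algebraic_semidom}"
  assumes "irreducible a"
  shows "irreducible [:a:]"
proof (rule irreducibleI)
  show "[:a:] \<noteq> 0" using assms by auto
  show "\<not> is_unit [:a:]" using assms by (auto simp: is_unit_const_poly_iff dest: irreducible_not_unit)
  fix u v assume uv: "[:a:] = u * v"
  then have nz: "u \<noteq> 0" "v \<noteq> 0" using \<open>[:a:] \<noteq> 0\<close> by auto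
  then have "degree u + degree v = 0" using uv by (metis degree_mult_eq degree_pCons_0)
  then obtain c e where ce: "u = [:c:]" "v = [:e:]" by (auto elim!: degree_eq_zeroE)
  then have "a = c * e" using uv by simp
  then have "is_unit c \<or> is_unit e" using assms by (auto dest: irreducibleD)
  then show "is_unit u \<or> is_unit v" using ce by (auto simp: is_unit_const_poly_iff)
qed

lemma const_mult: "const a * const b = const (a * b)"
  by (simp add: const_def mult_single)
lemma const_add: "const a + const b = const (a + b)"
  by (simp add: const_def single_add)
lemma const_0[simp]: "const 0 = 0" by (simp add: const_def)
lemma zero_mon3: "(0::mon3) = (0,0,0)" by (simp add: zero_prod_def)
lemma const_1[simp]: "const 1 = 1" by (simp add: const_def zero_mon3[symmetric])
lemma const_uminus: "const (- a) = - const a" by (simp add: const_def single_uminus)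
lemma of_nat_const: "(of_nat n :: S) = const (of_nat n)"
  by (simp add: const_def zero_mon3[symmetric])
lemma const_eq_0_iff[simp]: "const c = 0 \<longleftrightarrow> c = 0"
  by (metis const_def lookup_single_eq single_zero lookup_zero)
lemma const_inv: "c \<noteq> 0 \<Longrightarrow> const c * const (1 / c) = 1"
  by (simp add: const_mult)
lemma const_unit: "c \<noteq> 0 \<Longrightarrow> const c dvd 1"
proof -
  assume "c \<noteq> 0"
  then have "1 = const c * const (1 / c)" using const_inv by simp
  then show ?thesis by (rule dvdI)
qed

lemma lin_poly_single: "lin_poly (a,b,c) = Poly_Mapping.single (1,0,0) a + Poly_Mapping.single (0,1,0) b + Poly_Mapping.single (0,0,1) c"
  by (simp add: lin_poly_def const_def varX_def varY_def varZ_def mult_single zero_mon3 plus_triple)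

lemma homog_lin_poly: "homog 1 (lin_poly l)"
  by (cases l) (auto simp: lin_poly_single intro!: homog_add homog_single simp: tdeg_def)
lemma homog_const: "homog 0 (const c)"
  by (simp add: const_def homog_single tdeg_def)
lemma homog_varX: "homog 1 varX" by (simp add: varX_def homog_single tdeg_def)
lemma homog_varY: "homog 1 varY" by (simp add: varY_def homog_single tdeg_def)
lemma homog_varZ: "homog 1 varZ" by (simp add: varZ_def homog_single tdeg_def)

lemma lookup_lin_poly:
  "Poly_Mapping.lookup (lin_poly (a,b,c)) (1,0,0) = a"
  "Poly_Mapping.lookup (lin_poly (a,b,c)) (0,1,0) = b"
  "Poly_Mapping.lookup (lin_poly (a,b,c)) (0,0,1) = c"
  by (simp_all add: lin_poly_single lookup_add lookup_single)

lemma lin_poly_inj: "lin_poly l = lin_poly l' \<Longrightarrow> l = l'"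
proof -
  assume a: "lin_poly l = lin_poly l'"
  obtain a1 a2 a3 where l: "l = (a1,a2,a3)" by (cases l) auto
  obtain b1 b2 b3 where l': "l' = (b1,b2,b3)" by (cases l') auto
  show ?thesis using a lookup_lin_poly[of a1 a2 a3] lookup_lin_poly[of b1 b2 b3] unfolding l l' by simp
qed

lemma lin_poly_0: "lin_poly (0,0,0) = 0" by (simp add: lin_poly_single)

lemma lin_poly_nz: "l \<noteq> (0,0,0) \<Longrightarrow> lin_poly l \<noteq> 0"
  using lin_poly_inj[of l "(0,0,0)"] lin_poly_0 by auto

lemma const_mult_lin: "const t * lin_poly (a,b,c) = lin_poly (t*a, t*b, t*c)"
  by (simp add: lin_poly_def algebra_simps const_mult[symmetric])


lemma dX_single: "dX (Poly_Mapping.single m c) = Fx m c" by (simp add: dX_lin)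
lemma dY_single: "dY (Poly_Mapping.single m c) = Fy m c" by (simp add: dY_lin)
lemma dZ_single: "dZ (Poly_Mapping.single m c) = Fz m c" by (simp add: dZ_lin)

lemma dX_lin_poly: "dX (lin_poly (a,b,c)) = const a"
  by (simp add: lin_poly_single dX_add dX_single Fx_def const_def)
lemma dY_lin_poly: "dY (lin_poly (a,b,c)) = const b"
  by (simp add: lin_poly_single dY_add dY_single Fy_def const_def)
lemma dZ_lin_poly: "dZ (lin_poly (a,b,c)) = const c"
  by (simp add: lin_poly_single dZ_add dZ_single Fz_def const_def)

lemma dX_const: "dX (const c) = 0" by (simp add: const_def dX_single Fx_def)
lemma dY_const: "dY (const c) = 0" by (simp add: const_def dY_single Fy_def)
lemma dZ_const: "dZ (const c) = 0" by (simp add: const_def dZ_single Fz_def)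

lemma dX_1: "dX 1 = 0" using dX_const[of 1] by simp
lemma dY_1: "dY 1 = 0" using dY_const[of 1] by simp
lemma dZ_1: "dZ 1 = 0" using dZ_const[of 1] by simp

lemma phi_lin_poly: "phi (lin_poly (a,b,c)) = pCons (pCons (pCons 0 [:a:]) [:[:b:]:]) [:[:[:c:]:]:]"
  by (simp add: lin_poly_single phi_add phi_single mono3_def monom_0 monom_Suc One_nat_def)

lemma irr_lin:
  assumes "l \<noteq> (0,0,0)"
  shows "irreducible (phi (lin_poly l))"
proof -
  obtain a b c where l: "l = (a,b,c)" by (cases l) auto
  show ?thesis
  proof (cases "c = 0")
    case False
    show ?thesis unfolding l phi_lin_poly
      by (rule irr_deg1) (use False in \<open>simp_all add: is_unit_const_poly_iff dvd_field_iff\<close>)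
  next
    case c: True
    show ?thesis
    proof (cases "b = 0")
      case False
      have "irreducible (pCons (pCons 0 [:a:]) [:[:b:]:])"
        by (rule irr_deg1) (use False in \<open>simp_all add: is_unit_const_poly_iff dvd_field_iff\<close>)
      then show ?thesis unfolding l phi_lin_poly using c by (simp add: irr_const)
    next
      case b: True
      then have "a \<noteq> 0" using assms l c by auto
      have "irreducible (pCons 0 [:a:])"
        by (rule irr_deg1) (use \<open>a \<noteq> 0\<close> in \<open>simp_all add: dvd_field_iff\<close>)
      then show ?thesis unfolding l phi_lin_poly using b c by (simp add: irr_const)
    qed
  qed
qed

lemma lin_prime:
  assumes "l \<noteq> (0,0,0)" "lin_poly l dvd a * b"
  shows "lin_poly l dvd a \<or> lin_poly l dvd b"
proof -
  have "prime_elem (phi (lin_poly l))" using irr_lin[OF assms(1)] by (simp add: prime_elem_iff_irreducible)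
  moreover have "phi (lin_poly l) dvd phi a * phi b" using assms(2) by (simp add: phi_dvd flip: phi_mult)
  ultimately show ?thesis by (simp add: prime_elem_dvd_mult_iff phi_dvd)
qed


definition der :: "S3 \<Rightarrow> S \<Rightarrow> S" where
  "der r q = (case r of (a,b,c) \<Rightarrow> a * dX q + b * dY q + c * dZ q)"

lemma der3: "der (a,b,c) q = a * dX q + b * dY q + c * dZ q" by (simp add: der_def)

lemma AR_iff: "r \<in> AR f \<longleftrightarrow> der r f = 0"
  by (cases r) (simp add: AR_def der_def)

lemma der_mult: "der r (p * q) = der r p * q + p * der r q"
  by (cases r) (simp add: der_def dX_mult dY_mult dZ_mult algebra_simps)

lemma der_1: "der r 1 = 0"
  by (cases r) (simp add: der_def dX_1 dY_1 dZ_1)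

lemma der_lin: "der (r1,r2,r3) (lin_poly (a,b,c)) = r1 * const a + r2 * const b + r3 * const c"
  by (simp add: der_def dX_lin_poly dY_lin_poly dZ_lin_poly)

lemma der_tadd: "der (tadd r s) q = der r q + der s q"
  by (cases r; cases s) (simp add: der_def tadd_def algebra_simps)

lemma der_tsmul: "der (tsmul w r) q = w * der r q"
  by (cases r) (simp add: der_def tsmul_def algebra_simps)

fun pw :: "lform list \<Rightarrow> bool" where
  "pw [] = True"
| "pw (x # xs) = ((\<forall>y\<in>set xs. \<not> proportional x y \<and> \<not> proportional y x) \<and> pw xs)"

lemma pw_from_idx:
  "(\<forall>i<length xs. \<forall>j<length xs. i \<noteq> j \<longrightarrow> \<not> proportional (xs!i) (xs!j)) \<Longrightarrow> pw xs"
proof (induction xs)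
  case Nil then show ?case by simp
next
  case (Cons x xs)
  have a: "\<forall>i<length xs. \<forall>j<length xs. i \<noteq> j \<longrightarrow> \<not> proportional (xs!i) (xs!j)"
  proof (intro allI impI)
    fix i j assume "i < length xs" "j < length xs" "i \<noteq> j"
    then show "\<not> proportional (xs!i) (xs!j)" using Cons.prems[rule_format, of "Suc i" "Suc j"] by simp
  qed
  have b: "\<forall>y\<in>set xs. \<not> proportional x y \<and> \<not> proportional y x"
  proof
    fix y assume "y \<in> set xs"
    then obtain j where "j < length xs" "xs ! j = y" by (auto simp: in_set_conv_nth)
    then show "\<not> proportional x y \<and> \<not> proportional y x"
      using Cons.prems[rule_format, of 0 "Suc j"] Cons.prems[rule_format, of "Suc j" 0] by simp
  qed
  show ?case using Cons.IH[OF a] b by simp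
qed

lemma pw_filter: "pw xs \<Longrightarrow> pw (filter P xs)"
  by (induction xs) auto

lemma pw_remove1: "pw xs \<Longrightarrow> x \<in> set xs \<Longrightarrow> y \<in> set (remove1 x xs) \<Longrightarrow> \<not> proportional x y \<and> \<not> proportional y x"
proof (induction xs)
  case Nil then show ?case by simp
next
  case (Cons z zs)
  show ?case
  proof (cases "z = x")
    case True then show ?thesis using Cons.prems by auto
  next
    case False
    then have "x \<in> set zs" using Cons.prems by auto
    show ?thesis
    proof (cases "y = z")
      case True then show ?thesis using Cons.prems \<open>x \<in> set zs\<close> by auto
    next
      case False
      then have "y \<in> set (remove1 x zs)" using Cons.prems \<open>z \<noteq> x\<close> by auto
      then show ?thesis using Cons.IH Cons.prems \<open>x \<in> set zs\<close> by auto
    qed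
  qed
qed

definition prodL :: "lform list \<Rightarrow> S" where "prodL xs = prod_list (map lin_poly xs)"

lemma prodL_Nil[simp]: "prodL [] = 1" by (simp add: prodL_def)
lemma prodL_Cons[simp]: "prodL (x # xs) = lin_poly x * prodL xs" by (simp add: prodL_def)

lemma prodL_remove1: "x \<in> set xs \<Longrightarrow> prodL xs = lin_poly x * prodL (remove1 x xs)"
  by (induction xs) (auto simp: algebra_simps)

lemma prodL_filter: "prodL xs = prodL (filter P xs) * prodL (filter (\<lambda>x. \<not> P x) xs)"
  by (induction xs) (auto simp: algebra_simps)

lemma homog_prodL: "homog (length xs) (prodL xs)"
proof (induction xs)
  case Nil then show ?case by (simp add: homog_1)
next
  case (Cons x xs)
  show ?case using homog_mult[OF homog_lin_poly Cons.IH] by simp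
qed

lemma prodL_nz: "\<forall>l\<in>set xs. l \<noteq> (0,0,0) \<Longrightarrow> prodL xs \<noteq> 0"
  by (induction xs) (auto simp: lin_poly_nz)

lemma lin_not_unit: "l \<noteq> (0,0,0) \<Longrightarrow> \<not> lin_poly l dvd 1"
proof
  assume "l \<noteq> (0,0,0)" "lin_poly l dvd 1"
  then obtain v where "1 = lin_poly l * v" by (auto elim: dvdE)
  then have "(1::nat) = 0" using homog_unit_deg[OF homog_lin_poly, of l v] by simp
  then show False by simp
qed

lemma lin_dvd_lin:
  assumes "l \<noteq> (0,0,0)" "l' \<noteq> (0,0,0)" "lin_poly l dvd lin_poly l'"
  shows "proportional l l'"
proof -
  obtain w where w: "lin_poly l' = w * lin_poly l" using assms(3) by (auto elim!: dvdE simp: mult.commute)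
  have "lin_poly l' = hc 1 (lin_poly l')" using hc_homog_same[OF homog_lin_poly] by metis
  also have "\<dots> = hc 0 w * lin_poly l" unfolding w by (simp add: hc_mult_homog[OF homog_lin_poly])
  finally have e: "lin_poly l' = const (Poly_Mapping.lookup w (0,0,0)) * lin_poly l" by (simp add: hc_0_const)
  define t where "t = Poly_Mapping.lookup w (0,0,0)"
  obtain a b c where l: "l = (a,b,c)" by (cases l) auto
  have "lin_poly l' = lin_poly (t*a, t*b, t*c)" using e by (simp add: t_def l const_mult_lin)
  then have l'eq: "l' = (t*a, t*b, t*c)" by (rule lin_poly_inj)
  then have "t \<noteq> 0" using assms(2) by auto
  then show ?thesis unfolding proportional_def using l'eq l by auto
qed

lemma lin_dvd_prodL:
  assumes "l \<noteq> (0,0,0)" "\<forall>y\<in>set ys. y \<noteq> (0,0,0)" "lin_poly l dvd prodL ys"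
  shows "\<exists>y\<in>set ys. proportional l y"
  using assms(2,3)
proof (induction ys)
  case Nil then show ?case using lin_not_unit[OF assms(1)] by simp
next
  case (Cons y ys)
  from Cons.prems have "lin_poly l dvd lin_poly y \<or> lin_poly l dvd prodL ys"
    using lin_prime[OF assms(1)] by simp
  then show ?case
  proof
    assume "lin_poly l dvd lin_poly y"
    then show ?thesis using lin_dvd_lin[OF assms(1)] Cons.prems by auto
  next
    assume "lin_poly l dvd prodL ys"
    then show ?thesis using Cons by auto
  qed
qed

lemma prodL_dvd:
  assumes "pw ys" "\<forall>y\<in>set ys. y \<noteq> (0,0,0)" "\<forall>y\<in>set ys. lin_poly y dvd q"
  shows "prodL ys dvd q"
  using assms
proof (induction ys arbitrary: q)
  case Nil then show ?case by simp
next
  case (Cons y ys)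
  have "prodL ys dvd q" using Cons by simp
  then obtain w where w: "q = prodL ys * w" by (auto elim: dvdE)
  have "lin_poly y dvd prodL ys * w" using Cons.prems w by simp
  then have "lin_poly y dvd prodL ys \<or> lin_poly y dvd w" using lin_prime Cons.prems by simp
  moreover have "\<not> lin_poly y dvd prodL ys"
  proof
    assume "lin_poly y dvd prodL ys"
    moreover have "y \<noteq> (0,0,0)" "\<forall>y\<in>set ys. y \<noteq> (0,0,0)" using Cons.prems(2) by auto
    ultimately obtain z where "z \<in> set ys" "proportional y z" using lin_dvd_prodL[of y ys] by blast
    then show False using Cons.prems(1) by simp
  qed
  ultimately have "lin_poly y dvd w" by simp
  then obtain w' where "w = lin_poly y * w'" by (auto elim: dvdE)
  then have "q = (lin_poly y * prodL ys) * w'" using w by (simp add: algebra_simps)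
  then show ?case by simp
qed

lemma dvd_prodL_cases:
  assumes "\<forall>y\<in>set ys. y \<noteq> (0,0,0)" "psi dvd prodL ys"
  shows "psi dvd 1 \<or> (\<exists>y\<in>set ys. lin_poly y dvd psi)"
  using assms
proof (induction ys arbitrary: psi)
  case Nil then show ?case by simp
next
  case (Cons y ys)
  obtain e where e: "lin_poly y * prodL ys = psi * e" using Cons.prems by (auto elim!: dvdE)
  have "lin_poly y dvd psi * e" unfolding e[symmetric] by simp
  then have "lin_poly y dvd psi \<or> lin_poly y dvd e" using lin_prime Cons.prems by simp
  then show ?case
  proof
    assume "lin_poly y dvd psi" then show ?thesis by auto
  next
    assume "lin_poly y dvd e"
    then obtain e' where e': "e = lin_poly y * e'" by (auto elim: dvdE)
    have "lin_poly y * prodL ys = lin_poly y * (psi * e')" using e e' by (simp add: algebra_simps)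
    moreover have "lin_poly y \<noteq> 0" using lin_poly_nz Cons.prems by simp
    ultimately have "prodL ys = psi * e'" using S_cancel by blast
    then have "psi dvd prodL ys" by simp
    then show ?thesis using Cons.IH Cons.prems by auto
  qed
qed

lemma der_prodL_zero: "\<forall>y\<in>set ys. der r (lin_poly y) = 0 \<Longrightarrow> der r (prodL ys) = 0"
  by (induction ys) (auto simp: der_mult der_1)

abbreviation XV :: S3 where "XV \<equiv> (varX, varY, varZ)"

lemma der_XV_lin: "der XV (lin_poly l) = lin_poly l"
proof -
  obtain a b c where l: "l = (a,b,c)" by (cases l) auto
  show ?thesis unfolding l by (simp only: der_lin) (simp add: lin_poly_def algebra_simps)
qed

lemma der_XV_prodL: "der XV (prodL ys) = of_nat (length ys) * prodL ys"
  by (induction ys) (auto simp: der_mult der_1 der_XV_lin algebra_simps)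


lemma K_core:
  fixes c1 c2 c3 x1 x2 x3 t1 t2 t3 ci :: S
  assumes det: "c1*(x2*t3 - x3*t2) + c2*(x3*t1 - x1*t3) + c3*(x1*t2 - x2*t1) = 0"
    and inv: "c3 * ci = 1"
    and prime: "\<And>a b. (c2*x3 - c3*x2) dvd a*b \<Longrightarrow> (c2*x3 - c3*x2) dvd a \<or> (c2*x3 - c3*x2) dvd b"
    and ndvd: "\<not> (c2*x3 - c3*x2) dvd (c3*x1 - c1*x3)"
    and nz: "c2*x3 - c3*x2 \<noteq> 0"
  shows "\<exists>\<alpha> \<beta>. t1 = \<alpha>*c1 + \<beta>*x1 \<and> t2 = \<alpha>*c2 + \<beta>*x2 \<and> t3 = \<alpha>*c3 + \<beta>*x3"
proof -
  define L1 where "L1 = c2*x3 - c3*x2"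
  define L2 where "L2 = c3*x1 - c1*x3"
  define L3 where "L3 = c1*x2 - c2*x1"
  define T1 where "T1 = c2*t3 - c3*t2"
  define T2 where "T2 = c3*t1 - c1*t3"
  define T3 where "T3 = c1*t2 - c2*t1"
  have i3: "L1*T2 - L2*T1 = c3 * (c1*(x2*t3 - x3*t2) + c2*(x3*t1 - x1*t3) + c3*(x1*t2 - x2*t1))"
    unfolding L1_def L2_def T1_def T2_def by (simp add: algebra_simps)
  have i2: "L3*T1 - L1*T3 = c2 * (c1*(x2*t3 - x3*t2) + c2*(x3*t1 - x1*t3) + c3*(x1*t2 - x2*t1))"
    unfolding L1_def L3_def T1_def T3_def by (simp add: algebra_simps)
  have e12: "L1*T2 = L2*T1" using i3 det by simp
  have e13: "L1*T3 = L3*T1" using i2 det by simp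
  have "L1 dvd L2 * T1" using e12 by (metis dvd_triv_left)
  then have "L1 dvd T1" using prime ndvd unfolding L1_def L2_def by blast
  then obtain \<beta> where b: "T1 = L1 * \<beta>" by (auto elim: dvdE)
  have "L1 * T2 = L1 * (L2 * \<beta>)" using e12 b by (simp add: algebra_simps)
  then have b2: "T2 = L2 * \<beta>" using S_cancel nz unfolding L1_def by blast
  have "L1 * T3 = L1 * (L3 * \<beta>)" using e13 b by (simp add: algebra_simps)
  then have b3: "T3 = L3 * \<beta>" using S_cancel nz unfolding L1_def by blast
  define V1 where "V1 = t1 - \<beta>*x1"
  define V2 where "V2 = t2 - \<beta>*x2"
  define V3 where "V3 = t3 - \<beta>*x3"
  have v1: "c2*V3 = c3*V2" using b unfolding V2_def V3_def T1_def L1_def by (simp add: algebra_simps)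
  have v2: "c3*V1 = c1*V3" using b2 unfolding V1_def V3_def T2_def L2_def by (simp add: algebra_simps)
  define \<alpha> where "\<alpha> = V3 * ci"
  have "V2 = ci * (c3 * V2)" using inv by (simp add: algebra_simps)
  also have "\<dots> = ci * (c2 * V3)" using v1 by simp
  finally have w2: "V2 = \<alpha> * c2" unfolding \<alpha>_def by (simp add: algebra_simps)
  have "V1 = ci * (c3 * V1)" using inv by (simp add: algebra_simps)
  also have "\<dots> = ci * (c1 * V3)" using v2 by simp
  finally have w1: "V1 = \<alpha> * c1" unfolding \<alpha>_def by (simp add: algebra_simps)
  have w3: "V3 = \<alpha> * c3" using inv unfolding \<alpha>_def by (simp add: algebra_simps)
  show ?thesis
    by (rule exI[of _ \<alpha>], rule exI[of _ \<beta>]) (use w1 w2 w3 in \<open>simp add: V1_def V2_def V3_def algebra_simps\<close>)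
qed


lemma dX_homog: "homog k q \<Longrightarrow> homog (k - 1) (dX q) \<and> (k = 0 \<longrightarrow> dX q = 0)"
proof -
  assume hq: "homog k q"
  have each: "\<And>m. m \<in> Poly_Mapping.keys q \<Longrightarrow> homog (k - 1) (Fx m (Poly_Mapping.lookup q m)) \<and> (k = 0 \<longrightarrow> Fx m (Poly_Mapping.lookup q m) = 0)"
  proof -
    fix m assume "m \<in> Poly_Mapping.keys q"
    then have t: "tdeg m = k" using hq by (simp add: homog_def)
    obtain i j l where m: "m = (i,j,l)" by (cases m) auto
    show "homog (k - 1) (Fx m (Poly_Mapping.lookup q m)) \<and> (k = 0 \<longrightarrow> Fx m (Poly_Mapping.lookup q m) = 0)"
    proof (cases "i = 0")
      case True then show ?thesis by (simp add: m Fx_def)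
    next
      case False then show ?thesis using t by (auto simp: m Fx_def tdeg_def intro!: homog_single)
    qed
  qed
  have "dX q = (\<Sum>m\<in>Poly_Mapping.keys q. Fx m (Poly_Mapping.lookup q m))" by (simp add: dX_lin lin_def)
  then show ?thesis using each by (auto intro!: homog_sum sum.neutral)
qed

lemma dY_homog: "homog k q \<Longrightarrow> homog (k - 1) (dY q) \<and> (k = 0 \<longrightarrow> dY q = 0)"
proof -
  assume hq: "homog k q"
  have each: "\<And>m. m \<in> Poly_Mapping.keys q \<Longrightarrow> homog (k - 1) (Fy m (Poly_Mapping.lookup q m)) \<and> (k = 0 \<longrightarrow> Fy m (Poly_Mapping.lookup q m) = 0)"
  proof -
    fix m assume "m \<in> Poly_Mapping.keys q"
    then have t: "tdeg m = k" using hq by (simp add: homog_def)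
    obtain i j l where m: "m = (i,j,l)" by (cases m) auto
    show "homog (k - 1) (Fy m (Poly_Mapping.lookup q m)) \<and> (k = 0 \<longrightarrow> Fy m (Poly_Mapping.lookup q m) = 0)"
    proof (cases "j = 0")
      case True then show ?thesis by (simp add: m Fy_def)
    next
      case False then show ?thesis using t by (auto simp: m Fy_def tdeg_def intro!: homog_single)
    qed
  qed
  have "dY q = (\<Sum>m\<in>Poly_Mapping.keys q. Fy m (Poly_Mapping.lookup q m))" by (simp add: dY_lin lin_def)
  then show ?thesis using each by (auto intro!: homog_sum sum.neutral)
qed

lemma dZ_homog: "homog k q \<Longrightarrow> homog (k - 1) (dZ q) \<and> (k = 0 \<longrightarrow> dZ q = 0)"
proof -
  assume hq: "homog k q"
  have each: "\<And>m. m \<in> Poly_Mapping.keys q \<Longrightarrow> homog (k - 1) (Fz m (Poly_Mapping.lookup q m)) \<and> (k = 0 \<longrightarrow> Fz m (Poly_Mapping.lookup q m) = 0)"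
  proof -
    fix m assume "m \<in> Poly_Mapping.keys q"
    then have t: "tdeg m = k" using hq by (simp add: homog_def)
    obtain i j l where m: "m = (i,j,l)" by (cases m) auto
    show "homog (k - 1) (Fz m (Poly_Mapping.lookup q m)) \<and> (k = 0 \<longrightarrow> Fz m (Poly_Mapping.lookup q m) = 0)"
    proof (cases "l = 0")
      case True then show ?thesis by (simp add: m Fz_def)
    next
      case False then show ?thesis using t by (auto simp: m Fz_def tdeg_def intro!: homog_single)
    qed
  qed
  have "dZ q = (\<Sum>m\<in>Poly_Mapping.keys q. Fz m (Poly_Mapping.lookup q m))" by (simp add: dZ_lin lin_def)
  then show ?thesis using each by (auto intro!: homog_sum sum.neutral)
qed

lemma homog_vd:
  assumes "homog 1 v" "homog k q" "homog (k - 1) dq" "k = 0 \<longrightarrow> dq = 0"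
  shows "homog k (v * dq)"
proof (cases "k = 0")
  case True then show ?thesis using assms by simp
next
  case False
  then show ?thesis using homog_mult[OF assms(1) assms(3)] by simp
qed

lemma homog_vdX: "homog 1 v \<Longrightarrow> homog k q \<Longrightarrow> homog k (v * dX q)"
  using homog_vd dX_homog by blast
lemma homog_vdY: "homog 1 v \<Longrightarrow> homog k q \<Longrightarrow> homog k (v * dY q)"
  using homog_vd dY_homog by blast
lemma homog_vdZ: "homog 1 v \<Longrightarrow> homog k q \<Longrightarrow> homog k (v * dZ q)"
  using homog_vd dZ_homog by blast

lemma homog_const_mult: "homog k q \<Longrightarrow> homog k (const c * q)"
  using homog_mult[OF homog_const] by fastforce

lemma dvd_cancel_const: "(x::S) dvd y * const c \<Longrightarrow> c \<noteq> 0 \<Longrightarrow> x dvd y"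
proof -
  assume "x dvd y * const c" "c \<noteq> 0"
  then have "x dvd y * const c * const (1/c)" by simp
  also have "y * const c * const (1/c) = y" using const_inv[OF \<open>c \<noteq> 0\<close>] by (simp add: mult.assoc)
  finally show ?thesis .
qed

lemma triple_id1:
  fixes P1 P2 P3 X1 X2 X3 T1 T2 T3 A1 A2 A3 :: "'a::comm_ring_1"
  shows "(P1*(X2*T3 - X3*T2) + P2*(X3*T1 - X1*T3) + P3*(X1*T2 - X2*T1)) * A1 =
    (A1*P1+A2*P2+A3*P3)*(X2*T3 - X3*T2) + (A1*X1+A2*X2+A3*X3)*(T2*P3 - T3*P2) + (A1*T1+A2*T2+A3*T3)*(P2*X3 - P3*X2)"
  by (simp add: algebra_simps)
lemma triple_id2:
  fixes P1 P2 P3 X1 X2 X3 T1 T2 T3 A1 A2 A3 :: "'a::comm_ring_1"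
  shows "(P1*(X2*T3 - X3*T2) + P2*(X3*T1 - X1*T3) + P3*(X1*T2 - X2*T1)) * A2 =
    (A1*P1+A2*P2+A3*P3)*(X3*T1 - X1*T3) + (A1*X1+A2*X2+A3*X3)*(T3*P1 - T1*P3) + (A1*T1+A2*T2+A3*T3)*(P3*X1 - P1*X3)"
  by (simp add: algebra_simps)
lemma triple_id3:
  fixes P1 P2 P3 X1 X2 X3 T1 T2 T3 A1 A2 A3 :: "'a::comm_ring_1"
  shows "(P1*(X2*T3 - X3*T2) + P2*(X3*T1 - X1*T3) + P3*(X1*T2 - X2*T1)) * A3 =
    (A1*P1+A2*P2+A3*P3)*(X1*T2 - X2*T1) + (A1*X1+A2*X2+A3*X3)*(T1*P2 - T2*P1) + (A1*T1+A2*T2+A3*T3)*(P1*X2 - P2*X1)"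
  by (simp add: algebra_simps)


locale arr_pt =
  fixes L :: "lform list" and p1 p2 p3 :: complex
  assumes arr: "arrangement L" and pnz: "(p1,p2,p3) \<noteq> (0,0,0)" and m2: "mult_pt L (p1,p2,p3) \<ge> 2"
begin

abbreviation "p \<equiv> (p1,p2,p3)"
definition "G = filter (\<lambda>l. lin_eval l p = 0) L"
definition "H = filter (\<lambda>l. \<not> lin_eval l p = 0) L"
definition "g = prodL G"
definition "h = prodL H"
definition "PV = (const p1, const p2, const p3)"
definition "Ph = der PV h"
definition "d = length L"
definition "m = length G"
abbreviation "f \<equiv> defpoly L"

lemma m_eq: "mult_pt L p = m"
  unfolding mult_pt_def m_def G_def by (simp add: length_filter_conv_card)

lemma lenGH: "m + length H = d"
  unfolding m_def d_def G_def H_def by (rule sum_length_filter_compl)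

lemma m_ge2: "m \<ge> 2" using m2 m_eq by simp
lemma m_le: "m \<le> d" using lenGH by simp
lemma lenH: "length H = d - m" using lenGH by simp
lemma d_ge2: "d \<ge> 2" using m_ge2 m_le by simp

lemma f_eq: "f = g * h"
  unfolding defpoly_def g_def h_def G_def H_def using prodL_filter[of L] by (simp add: prodL_def)

lemma nzL: "\<forall>l\<in>set L. l \<noteq> (0,0,0)" using arr by (simp add: arrangement_def)
lemma nzG: "\<forall>l\<in>set G. l \<noteq> (0,0,0)" using nzL by (simp add: G_def)
lemma nzH: "\<forall>l\<in>set H. l \<noteq> (0,0,0)" using nzL by (simp add: H_def)
lemma pwL: "pw L" using arr by (intro pw_from_idx) (simp add: arrangement_def)
lemma pwG: "pw G" using pwL by (simp add: G_def pw_filter)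
lemma pwH: "pw H" using pwL by (simp add: H_def pw_filter)

lemma der_PV_lin: "der PV (lin_poly l) = const (lin_eval l p)"
proof -
  obtain a b c where l: "l = (a,b,c)" by (cases l) auto
  show ?thesis unfolding l PV_def der_lin by (simp add: lin_eval_def const_mult const_add algebra_simps)
qed

lemma der_PV_g: "der PV g = 0"
  unfolding g_def by (rule der_prodL_zero) (simp add: der_PV_lin G_def)

lemma der_PV_f: "der PV f = g * Ph"
  by (simp add: f_eq der_mult der_PV_g Ph_def)

lemma der_XV_f: "der XV f = of_nat d * f"
  by (simp add: defpoly_def der_XV_prodL[of L, unfolded prodL_def] d_def)

lemma der_XV_g: "der XV g = of_nat m * g"
  by (simp add: g_def m_def der_XV_prodL)

lemma g_nz: "g \<noteq> 0" unfolding g_def using prodL_nz nzG by simp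
lemma h_nz: "h \<noteq> 0" unfolding h_def using prodL_nz nzH by simp
lemma homog_g: "homog m g" unfolding g_def m_def by (rule homog_prodL)
lemma homog_h: "homog (d - m) h" unfolding h_def using homog_prodL[of H] lenH by simp

lemma homog_Ph_var: "homog 1 v \<Longrightarrow> homog (d - m) (Ph * v)"
proof -
  assume v: "homog 1 v"
  have "Ph * v = const p1 * (v * dX h) + const p2 * (v * dY h) + const p3 * (v * dZ h)"
    by (simp add: Ph_def PV_def der3 algebra_simps)
  moreover have "homog (d - m) (const p1 * (v * dX h) + const p2 * (v * dY h) + const p3 * (v * dZ h))"
    by (intro homog_add homog_const_mult homog_vdX[OF v homog_h] homog_vdY[OF v homog_h] homog_vdZ[OF v homog_h])
  ultimately show ?thesis by simp
qed

definition "theta0 = (of_nat d * h * const p1 - Ph * varX, of_nat d * h * const p2 - Ph * varY,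
                      of_nat d * h * const p3 - Ph * varZ)"

lemma theta0_alt: "theta0 = tadd (tsmul (of_nat d * h) PV) (tsmul (- Ph) XV)"
  by (simp add: theta0_def tadd_def tsmul_def PV_def)

lemma theta0_AR: "der theta0 f = 0"
  unfolding theta0_alt der_tadd der_tsmul der_PV_f der_XV_f by (simp add: f_eq algebra_simps)

lemma homog3_theta0: "homog3 (d - m) theta0"
proof -
  have "homog (d - m) (of_nat d * h * const c)" for c
    using homog_mult[OF homog_mult[OF homog_const homog_h] homog_const] by (simp add: of_nat_const)
  then show ?thesis unfolding homog3_def theta0_def
    using homog_Ph_var[OF homog_varX] homog_Ph_var[OF homog_varY] homog_Ph_var[OF homog_varZ]
    by (auto intro!: homog_diff)
qed

lemma theta0_nz: "theta0 \<noteq> (0,0,0)"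
proof
  assume t: "theta0 = (0,0,0)"
  define D where "D = of_nat d * h"
  have e: "D * const p1 = Ph * varX" "D * const p2 = Ph * varY" "D * const p3 = Ph * varZ"
    using t unfolding theta0_def D_def by auto
  have Dnz: "D \<noteq> 0" using h_nz d_ge2 unfolding D_def by (simp add: of_nat_const)
  have "D * (const p1 * varY - const p2 * varX) = (D * const p1) * varY - (D * const p2) * varX"
    by (simp add: algebra_simps)
  also have "\<dots> = (Ph * varX) * varY - (Ph * varY) * varX" using e by simp
  also have "\<dots> = 0" by (simp add: algebra_simps)
  finally have "D * (const p1 * varY - const p2 * varX) = 0" .
  then have "const p1 * varY - const p2 * varX = 0" using Dnz by simp
  moreover have "lin_poly (-p2, p1, 0) = const p1 * varY - const p2 * varX"
    by (simp add: lin_poly_def const_uminus algebra_simps)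
  ultimately have 1: "lin_poly (-p2, p1, 0) = 0" by simp
  have "D * (const p1 * varZ - const p3 * varX) = (D * const p1) * varZ - (D * const p3) * varX"
    by (simp add: algebra_simps)
  also have "\<dots> = (Ph * varX) * varZ - (Ph * varZ) * varX" using e by simp
  also have "\<dots> = 0" by (simp add: algebra_simps)
  finally have "D * (const p1 * varZ - const p3 * varX) = 0" .
  then have "const p1 * varZ - const p3 * varX = 0" using Dnz by simp
  moreover have "lin_poly (-p3, 0, p1) = const p1 * varZ - const p3 * varX"
    by (simp add: lin_poly_def const_uminus algebra_simps)
  ultimately have 2: "lin_poly (-p3, 0, p1) = 0" by simp
  have "(-p2, p1, 0) = (0,0,0)" "(-p3, 0, p1) = (0,0,0)"
    using 1 2 lin_poly_nz by blast+
  then show False using pnz by simp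
qed

end


context arr_pt begin

definition Phi :: "S3 \<Rightarrow> S" where
  "Phi r = (case r of (t1,t2,t3) \<Rightarrow> const p1*(varY*t3 - varZ*t2) + const p2*(varZ*t1 - varX*t3) + const p3*(varX*t2 - varY*t1))"

lemma Phi3: "Phi (t1,t2,t3) = const p1*(varY*t3 - varZ*t2) + const p2*(varZ*t1 - varX*t3) + const p3*(varX*t2 - varY*t1)"
  by (simp add: Phi_def)

lemma Phi_tadd: "Phi (tadd r s) = Phi r + Phi s"
  by (cases r; cases s) (simp add: Phi_def tadd_def algebra_simps)

lemma Phi_tsmul: "Phi (tsmul w r) = w * Phi r"
  by (cases r) (simp add: Phi_def tsmul_def algebra_simps)

lemma Phi_theta0: "Phi theta0 = 0"
  by (simp add: Phi_def theta0_def algebra_simps)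

lemma homog_Phi:
  assumes "homog3 k r"
  shows "homog (k + 1) (Phi r)"
proof -
  obtain t1 t2 t3 where r: "r = (t1,t2,t3)" by (cases r) auto
  have ht: "homog k t1" "homog k t2" "homog k t3" using assms r by (auto simp: homog3_def)
  have hv: "\<And>v t. homog 1 v \<Longrightarrow> homog k t \<Longrightarrow> homog (k+1) (v * t)"
    using homog_mult by fastforce
  have hc: "\<And>c q. homog (k+1) q \<Longrightarrow> homog (k+1) (const c * q)" by (rule homog_const_mult)
  show ?thesis unfolding r Phi3
    by (intro homog_add homog_diff hc hv ht homog_varX homog_varY homog_varZ)
qed

lemma line_dvd_der:
  assumes "der r f = 0" "l \<in> set L"
  shows "lin_poly l dvd der r (lin_poly l)"
proof -
  define f' where "f' = prodL (remove1 l L)"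
  have fe: "f = lin_poly l * f'" unfolding f'_def defpoly_def using prodL_remove1[OF assms(2)] by (simp add: prodL_def)
  have "0 = der r (lin_poly l) * f' + lin_poly l * der r f'" using assms(1) fe by (simp add: der_mult)
  then have "der r (lin_poly l) * f' = lin_poly l * (- der r f')" by (simp add: eq_neg_iff_add_eq_0)
  then have "lin_poly l dvd der r (lin_poly l) * f'" by (metis dvd_triv_left)
  moreover have lnz: "l \<noteq> (0,0,0)" using nzL assms(2) by auto
  ultimately have "lin_poly l dvd der r (lin_poly l) \<or> lin_poly l dvd f'" using lin_prime by blast
  moreover have "\<not> lin_poly l dvd f'"
  proof
    assume "lin_poly l dvd f'"
    moreover have "\<forall>y\<in>set (remove1 l L). y \<noteq> (0,0,0)" using nzL set_remove1_subset[of l L] by auto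
    ultimately obtain y where "y \<in> set (remove1 l L)" "proportional l y"
      using lin_dvd_prodL[OF lnz] unfolding f'_def by blast
    then show False using pw_remove1[OF pwL assms(2)] by blast
  qed
  ultimately show ?thesis by blast
qed

lemma lines_G_dvd_Phi:
  assumes "der r f = 0" "l \<in> set G"
  shows "lin_poly l dvd Phi r"
proof -
  obtain t1 t2 t3 where r: "r = (t1,t2,t3)" by (cases r) auto
  obtain a1 a2 a3 where l: "l = (a1,a2,a3)" by (cases l) auto
  have lL: "l \<in> set L" and ev: "lin_eval l p = 0" using assms(2) by (auto simp: G_def)
  have lnz: "l \<noteq> (0,0,0)" using nzL lL by auto
  have "lin_poly l dvd der r (lin_poly l)" by (rule line_dvd_der[OF assms(1) lL])
  then obtain t where t: "const a1 * t1 + const a2 * t2 + const a3 * t3 = lin_poly l * t"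
    unfolding r l der_lin by (auto elim!: dvdE simp: algebra_simps)
  have AP: "const a1 * const p1 + const a2 * const p2 + const a3 * const p3 = 0"
    using ev by (simp add: l lin_eval_def const_mult const_add)
  have AX: "const a1 * varX + const a2 * varY + const a3 * varZ = lin_poly l"
    by (simp add: l lin_poly_def)
  have "Phi r * const a1 = (const a1 * const p1 + const a2 * const p2 + const a3 * const p3)*(varY*t3 - varZ*t2)
      + (const a1 * varX + const a2 * varY + const a3 * varZ)*(t2*const p3 - t3*const p2) + (const a1 * t1 + const a2 * t2 + const a3 * t3)*(const p2*varZ - const p3*varY)"
    unfolding r Phi3 by (rule triple_id1)
  then have "Phi r * const a1 = lin_poly l * (t2*const p3 - t3*const p2) + (lin_poly l * t)*(const p2*varZ - const p3*varY)" unfolding AP AX t by simp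
  then have k1: "lin_poly l dvd Phi r * const a1" by (simp add: mult.assoc)
  have "Phi r * const a2 = (const a1 * const p1 + const a2 * const p2 + const a3 * const p3)*(varZ*t1 - varX*t3)
      + (const a1 * varX + const a2 * varY + const a3 * varZ)*(t3*const p1 - t1*const p3) + (const a1 * t1 + const a2 * t2 + const a3 * t3)*(const p3*varX - const p1*varZ)"
    unfolding r Phi3 by (rule triple_id2)
  then have "Phi r * const a2 = lin_poly l * (t3*const p1 - t1*const p3) + (lin_poly l * t)*(const p3*varX - const p1*varZ)" unfolding AP AX t by simp
  then have k2: "lin_poly l dvd Phi r * const a2" by (simp add: mult.assoc)
  have "Phi r * const a3 = (const a1 * const p1 + const a2 * const p2 + const a3 * const p3)*(varX*t2 - varY*t1)
      + (const a1 * varX + const a2 * varY + const a3 * varZ)*(t1*const p2 - t2*const p1) + (const a1 * t1 + const a2 * t2 + const a3 * t3)*(const p1*varY - const p2*varX)"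
    unfolding r Phi3 by (rule triple_id3)
  then have "Phi r * const a3 = lin_poly l * (t1*const p2 - t2*const p1) + (lin_poly l * t)*(const p1*varY - const p2*varX)" unfolding AP AX t by simp
  then have k3: "lin_poly l dvd Phi r * const a3" by (simp add: mult.assoc)
  show ?thesis
  proof (cases "a1 = 0")
    case False then show ?thesis using dvd_cancel_const[OF k1] by simp
  next
    case True
    show ?thesis
    proof (cases "a2 = 0")
      case False then show ?thesis using dvd_cancel_const[OF k2] by simp
    next
      case True
      then have "a3 \<noteq> 0" using \<open>a1 = 0\<close> lnz l by auto
      then show ?thesis using dvd_cancel_const[OF k3] by simp
    qed
  qed
qed

lemma g_dvd_Phi: "der r f = 0 \<Longrightarrow> g dvd Phi r"
  unfolding g_def using prodL_dvd[OF pwG nzG] lines_G_dvd_Phi by blast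


lemma H_not_dvd_Ph:
  assumes "l \<in> set H"
  shows "\<not> lin_poly l dvd Ph"
proof
  assume dv: "lin_poly l dvd Ph"
  define h' where "h' = prodL (remove1 l H)"
  have he: "h = lin_poly l * h'" unfolding h'_def h_def using prodL_remove1[OF assms] .
  have lnz: "l \<noteq> (0,0,0)" using nzH assms by auto
  have ev: "lin_eval l p \<noteq> 0" using assms by (simp add: H_def)
  have "Ph = const (lin_eval l p) * h' + lin_poly l * der PV h'"
    unfolding Ph_def he der_mult der_PV_lin ..
  then have "h' * const (lin_eval l p) = Ph - lin_poly l * der PV h'" by (simp add: algebra_simps)
  moreover have "lin_poly l dvd Ph - lin_poly l * der PV h'" using dv by simp
  ultimately have "lin_poly l dvd h' * const (lin_eval l p)" by simp
  then have "lin_poly l dvd h'" using dvd_cancel_const ev by blast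
  moreover have "\<forall>y\<in>set (remove1 l H). y \<noteq> (0,0,0)" using nzH set_remove1_subset[of l H] by auto
  ultimately obtain y where "y \<in> set (remove1 l H)" "proportional l y"
    using lin_dvd_prodL[OF lnz] unfolding h'_def by blast
  then show False using pw_remove1[OF pwH assms] by blast
qed

lemma h_dvd_of: "h dvd a * Ph \<Longrightarrow> h dvd a"
proof -
  assume a: "h dvd a * Ph"
  have "\<forall>l\<in>set H. lin_poly l dvd a"
  proof
    fix l assume lH: "l \<in> set H"
    have "lin_poly l dvd h" unfolding h_def using prodL_remove1[OF lH] by simp
    then have "lin_poly l dvd a * Ph" using a dvd_trans by blast
    then show "lin_poly l dvd a" using lin_prime nzH lH H_not_dvd_Ph by blast
  qed
  then show ?thesis unfolding h_def using prodL_dvd[OF pwH nzH] by blast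
qed

lemma eqL1: "const a * varZ - const b * varY = lin_poly (0, -b, a)"
  by (simp add: lin_poly_def const_uminus)
lemma eqL2: "const a * varX - const b * varZ = lin_poly (a, 0, -b)"
  by (simp add: lin_poly_def const_uminus)
lemma eqL3: "const a * varY - const b * varX = lin_poly (-b, a, 0)"
  by (simp add: lin_poly_def const_uminus)

lemma step1:
  assumes "Phi (t1,t2,t3) = 0"
  shows "\<exists>\<alpha> \<beta>. t1 = \<alpha>*const p1 + \<beta>*varX \<and> t2 = \<alpha>*const p2 + \<beta>*varY \<and> t3 = \<alpha>*const p3 + \<beta>*varZ"
proof -
  have det: "const p1*(varY*t3 - varZ*t2) + const p2*(varZ*t1 - varX*t3) + const p3*(varX*t2 - varY*t1) = 0"
    using assms by (simp add: Phi3)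
  consider "p3 \<noteq> 0" | "p1 \<noteq> 0" | "p2 \<noteq> 0" using pnz by auto
  then show ?thesis
  proof cases
    case 1
    have pr: "\<And>a b. lin_poly (0, -p3, p2) dvd a*b \<Longrightarrow> lin_poly (0, -p3, p2) dvd a \<or> lin_poly (0, -p3, p2) dvd b"
      using lin_prime 1 by simp
    have nd: "\<not> lin_poly (0, -p3, p2) dvd lin_poly (p3, 0, -p1)"
    proof
      assume "lin_poly (0, -p3, p2) dvd lin_poly (p3, 0, -p1)"
      then have "proportional (0, -p3, p2) (p3, 0, -p1)" using lin_dvd_lin 1 by simp
      then show False using 1 by (auto simp: proportional_def)
    qed
    have nz: "lin_poly (0, -p3, p2) \<noteq> 0" using lin_poly_nz 1 by simp
    show ?thesis
      by (rule K_core[where ?c1.0="const p1" and ?c2.0="const p2" and ?c3.0="const p3" and ?x1.0=varX and ?x2.0=varY and ?x3.0=varZ and ?t1.0=t1 and ?t2.0=t2 and ?t3.0=t3 and ci="const (1/p3)"])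
         (use det const_inv[OF 1] pr nd nz in \<open>simp_all add: eqL1 eqL2\<close>)
  next
    case 2
    have pr: "\<And>a b. lin_poly (p3, 0, -p1) dvd a*b \<Longrightarrow> lin_poly (p3, 0, -p1) dvd a \<or> lin_poly (p3, 0, -p1) dvd b"
      using lin_prime 2 by simp
    have nd: "\<not> lin_poly (p3, 0, -p1) dvd lin_poly (-p2, p1, 0)"
    proof
      assume "lin_poly (p3, 0, -p1) dvd lin_poly (-p2, p1, 0)"
      then have "proportional (p3, 0, -p1) (-p2, p1, 0)" using lin_dvd_lin 2 by simp
      then show False using 2 by (auto simp: proportional_def)
    qed
    have nz: "lin_poly (p3, 0, -p1) \<noteq> 0" using lin_poly_nz 2 by simp
    have det': "const p2*(varZ*t1 - varX*t3) + const p3*(varX*t2 - varY*t1) + const p1*(varY*t3 - varZ*t2) = 0"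
      using det by (simp add: algebra_simps)
    have "\<exists>\<alpha> \<beta>. t2 = \<alpha>*const p2 + \<beta>*varY \<and> t3 = \<alpha>*const p3 + \<beta>*varZ \<and> t1 = \<alpha>*const p1 + \<beta>*varX"
      by (rule K_core[where ?c1.0="const p2" and ?c2.0="const p3" and ?c3.0="const p1" and ?x1.0=varY and ?x2.0=varZ and ?x3.0=varX and ?t1.0=t2 and ?t2.0=t3 and ?t3.0=t1 and ci="const (1/p1)"])
         (use det' const_inv[OF 2] pr nd nz in \<open>simp_all add: eqL2 eqL3\<close>)
    then show ?thesis by blast
  next
    case 3
    have pr: "\<And>a b. lin_poly (-p2, p1, 0) dvd a*b \<Longrightarrow> lin_poly (-p2, p1, 0) dvd a \<or> lin_poly (-p2, p1, 0) dvd b"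
      using lin_prime 3 by simp
    have nd: "\<not> lin_poly (-p2, p1, 0) dvd lin_poly (0, -p3, p2)"
    proof
      assume "lin_poly (-p2, p1, 0) dvd lin_poly (0, -p3, p2)"
      then have "proportional (-p2, p1, 0) (0, -p3, p2)" using lin_dvd_lin 3 by simp
      then show False using 3 by (auto simp: proportional_def)
    qed
    have nz: "lin_poly (-p2, p1, 0) \<noteq> 0" using lin_poly_nz 3 by simp
    have det': "const p3*(varX*t2 - varY*t1) + const p1*(varY*t3 - varZ*t2) + const p2*(varZ*t1 - varX*t3) = 0"
      using det by (simp add: algebra_simps)
    have "\<exists>\<alpha> \<beta>. t3 = \<alpha>*const p3 + \<beta>*varZ \<and> t1 = \<alpha>*const p1 + \<beta>*varX \<and> t2 = \<alpha>*const p2 + \<beta>*varY"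
      by (rule K_core[where ?c1.0="const p3" and ?c2.0="const p1" and ?c3.0="const p2" and ?x1.0=varZ and ?x2.0=varX and ?x3.0=varY and ?t1.0=t3 and ?t2.0=t1 and ?t3.0=t2 and ci="const (1/p2)"])
         (use det' const_inv[OF 3] pr nd nz in \<open>simp_all add: eqL3 eqL1\<close>)
    then show ?thesis by blast
  qed
qed

end


lemma hc_comp: "homog e a \<Longrightarrow> hc k (A * a) = (if e \<le> k then hc (k - e) A else 0) * a"
  using hc_mult_homog[of e a k A] by simp

lemma hc3_combo2:
  assumes "homog3 e1 r1" "homog3 e2 r2" "homog3 k (tadd (tsmul A r1) (tsmul B r2))"
  shows "tadd (tsmul A r1) (tsmul B r2) =
    tadd (tsmul (if e1 \<le> k then hc (k - e1) A else 0) r1) (tsmul (if e2 \<le> k then hc (k - e2) B else 0) r2)"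
proof -
  obtain a1 a2 a3 where r1: "r1 = (a1,a2,a3)" by (cases r1) auto
  obtain b1 b2 b3 where r2: "r2 = (b1,b2,b3)" by (cases r2) auto
  have h: "homog e1 a1" "homog e1 a2" "homog e1 a3" "homog e2 b1" "homog e2 b2" "homog e2 b3"
    using assms(1,2) r1 r2 by (auto simp: homog3_def)
  have k: "homog k (A*a1 + B*b1)" "homog k (A*a2 + B*b2)" "homog k (A*a3 + B*b3)"
    using assms(3) r1 r2 by (auto simp: homog3_def tadd_def tsmul_def)
  have "A*a1 + B*b1 = hc k (A*a1 + B*b1)" "A*a2 + B*b2 = hc k (A*a2 + B*b2)" "A*a3 + B*b3 = hc k (A*a3 + B*b3)"
    using hc_homog_same k by metis+
  then show ?thesis unfolding r1 r2 tadd_def tsmul_def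
    by (simp add: hc_add hc_comp[OF h(1)] hc_comp[OF h(2)] hc_comp[OF h(3)] hc_comp[OF h(4)] hc_comp[OF h(5)] hc_comp[OF h(6)])
qed

lemma hc3_combo3:
  assumes "homog3 e1 r1" "homog3 e2 r2" "homog3 e3 r3" "homog3 k (tadd (tsmul A r1) (tadd (tsmul B r2) (tsmul C r3)))"
  shows "tadd (tsmul A r1) (tadd (tsmul B r2) (tsmul C r3)) =
    tadd (tsmul (if e1 \<le> k then hc (k - e1) A else 0) r1) (tadd (tsmul (if e2 \<le> k then hc (k - e2) B else 0) r2)
       (tsmul (if e3 \<le> k then hc (k - e3) C else 0) r3))"
proof -
  obtain a1 a2 a3 where r1: "r1 = (a1,a2,a3)" by (cases r1) auto
  obtain b1 b2 b3 where r2: "r2 = (b1,b2,b3)" by (cases r2) auto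
  obtain c1 c2 c3 where r3: "r3 = (c1,c2,c3)" by (cases r3) auto
  have h: "homog e1 a1" "homog e1 a2" "homog e1 a3" "homog e2 b1" "homog e2 b2" "homog e2 b3"
     "homog e3 c1" "homog e3 c2" "homog e3 c3"
    using assms(1,2,3) r1 r2 r3 by (auto simp: homog3_def)
  have k: "homog k (A*a1 + (B*b1 + C*c1))" "homog k (A*a2 + (B*b2 + C*c2))" "homog k (A*a3 + (B*b3 + C*c3))"
    using assms(4) r1 r2 r3 by (auto simp: homog3_def tadd_def tsmul_def)
  have "A*a1 + (B*b1 + C*c1) = hc k (A*a1 + (B*b1 + C*c1))" "A*a2 + (B*b2 + C*c2) = hc k (A*a2 + (B*b2 + C*c2))"
    "A*a3 + (B*b3 + C*c3) = hc k (A*a3 + (B*b3 + C*c3))"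
    using hc_homog_same k by metis+
  then show ?thesis unfolding r1 r2 r3 tadd_def tsmul_def
    by (simp add: hc_add hc_comp[OF h(1)] hc_comp[OF h(2)] hc_comp[OF h(3)] hc_comp[OF h(4)] hc_comp[OF h(5)] hc_comp[OF h(6)]
       hc_comp[OF h(7)] hc_comp[OF h(8)] hc_comp[OF h(9)])
qed

context arr_pt begin

lemma d_const_inv: "of_nat d * const (1 / of_nat d) = (1::S)"
  using d_ge2 const_inv[of "of_nat d"] by (simp add: of_nat_const)

lemma key:
  assumes "der r f = 0" "Phi r = 0"
  shows "\<exists>w. r = tsmul w theta0"
proof -
  obtain t1 t2 t3 where r: "r = (t1,t2,t3)" by (cases r) auto
  obtain \<alpha> \<beta> where ab: "t1 = \<alpha>*const p1 + \<beta>*varX" "t2 = \<alpha>*const p2 + \<beta>*varY" "t3 = \<alpha>*const p3 + \<beta>*varZ"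
    using step1 assms(2) r by blast
  have ralt: "r = tadd (tsmul \<alpha> PV) (tsmul \<beta> XV)"
    by (simp add: r ab tadd_def tsmul_def PV_def algebra_simps)
  have "0 = \<alpha> * (g * Ph) + \<beta> * (of_nat d * f)"
    using assms(1) unfolding ralt der_tadd der_tsmul der_PV_f der_XV_f by simp
  then have "g * (\<alpha> * Ph + \<beta> * of_nat d * h) = 0" by (simp add: f_eq algebra_simps)
  then have "\<alpha> * Ph + \<beta> * of_nat d * h = 0" using g_nz by simp
  then have e: "\<alpha> * Ph = h * (- (\<beta> * of_nat d))" by (simp add: algebra_simps eq_neg_iff_add_eq_0)
  then have "h dvd \<alpha> * Ph" by simp
  then have "h dvd \<alpha>" by (rule h_dvd_of)
  then obtain w where w: "\<alpha> = h * w" by (auto elim: dvdE)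
  have "h * (w * Ph) = h * (- (\<beta> * of_nat d))" using e w by (simp add: algebra_simps)
  then have e2: "w * Ph = - (\<beta> * of_nat d)" using S_cancel h_nz by blast
  have b: "\<beta> = - (const (1 / of_nat d) * w * Ph)"
  proof -
    have "\<beta> = \<beta> * (of_nat d * const (1 / of_nat d))" using d_const_inv by simp
    also have "\<dots> = - (const (1 / of_nat d) * (w * Ph))" using e2 by (simp add: algebra_simps)
    finally show ?thesis by (simp add: algebra_simps)
  qed
  have "r = tsmul (const (1 / of_nat d) * w) theta0"
  proof -
    have c: "\<And>c. const (1 / of_nat d) * w * (of_nat d * h * c) = h * w * c"
    proof -
      fix c
      have "const (1 / of_nat d) * w * (of_nat d * h * c) = (of_nat d * const (1 / of_nat d)) * (h * w * c)"
        by (simp add: algebra_simps)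
      then show "const (1 / of_nat d) * w * (of_nat d * h * c) = h * w * c" using d_const_inv by simp
    qed
    have dh: "of_nat d * (h * const (1 / of_nat d)) = h"
      using d_const_inv by (metis mult.commute mult.left_commute mult_1_right)
    show ?thesis unfolding r ab w b theta0_def tsmul_def
      by (simp add: right_diff_distrib c algebra_simps dh)
  qed
  then show ?thesis by blast
qed

lemma hc3_tsmul_small:
  assumes "homog3 e s" "homog3 k (tsmul w s)" "k < e"
  shows "tsmul w s = (0,0,0)"
proof -
  obtain s1 s2 s3 where s: "s = (s1,s2,s3)" by (cases s) auto
  have hs: "homog e s1" "homog e s2" "homog e s3" using assms(1) s by (auto simp: homog3_def)
  have hw: "homog k (w * s1)" "homog k (w * s2)" "homog k (w * s3)" using assms(2) s by (auto simp: homog3_def tsmul_def)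
  have "w * s1 = 0" using hc_homog_same[OF hw(1)] hc_mult_homog[OF hs(1), of k w] assms(3) by simp
  moreover have "w * s2 = 0" using hc_homog_same[OF hw(2)] hc_mult_homog[OF hs(2), of k w] assms(3) by simp
  moreover have "w * s3 = 0" using hc_homog_same[OF hw(3)] hc_mult_homog[OF hs(3), of k w] assms(3) by simp
  ultimately show ?thesis by (simp add: s tsmul_def)
qed

lemma key_small:
  assumes "der r f = 0" "Phi r = 0" "homog3 k r" "k < d - m"
  shows "r = (0,0,0)"
proof -
  obtain w where w: "r = tsmul w theta0" using key assms by blast
  show ?thesis using hc3_tsmul_small[OF homog3_theta0, of k w] assms w by simp
qed

lemma Phi_split:
  assumes "der r f = 0" "homog3 k r"
  shows "\<exists>\<psi>. homog (k + 1 - m) \<psi> \<and> Phi r = (if m \<le> k + 1 then \<psi> * g else 0)"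
proof -
  obtain \<psi> where psi: "Phi r = g * \<psi>" using g_dvd_Phi[OF assms(1)] by (auto elim: dvdE)
  have "Phi r = hc (k+1) (Phi r)" using hc_homog_same[OF homog_Phi[OF assms(2)]] by simp
  also have "\<dots> = (if m \<le> k + 1 then hc (k + 1 - m) \<psi> * g else 0)"
    unfolding psi mult.commute[of g] by (rule hc_mult_homog[OF homog_g])
  finally show ?thesis using homog_hc by blast
qed

lemma Phi_small:
  assumes "der r f = 0" "homog3 k r" "k + 1 < m"
  shows "Phi r = 0"
  using Phi_split[OF assms(1,2)] assms(3) by auto

lemma small_zero:
  assumes "der r f = 0" "homog3 k r" "k + 1 < m" "k < d - m"
  shows "r = (0,0,0)"
  using key_small[OF assms(1) Phi_small[OF assms(1-3)] assms(2,4)] .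

end


context arr_pt begin

lemma exists_q: "\<exists>q1 q2 q3. q1 * p1 + q2 * p2 + q3 * p3 = 1"
proof -
  consider "p1 \<noteq> 0" | "p2 \<noteq> 0" | "p3 \<noteq> 0" using pnz by auto
  then show ?thesis
  proof cases
    case 1 then show ?thesis by (intro exI[of _ "1/p1"] exI[of _ 0]) simp
  next
    case 2 then show ?thesis by (intro exI[of _ 0] exI[of _ "1/p2"]) simp
  next
    case 3 then show ?thesis by (intro exI[of _ 0] exI[of _ 0] exI[of _ "1/p3"]) simp
  qed
qed

definition "qq = (SOME q. fst q * p1 + fst (snd q) * p2 + snd (snd q) * p3 = 1)"
definition "Q1 = const (fst qq)"
definition "Q2 = const (fst (snd qq))"
definition "Q3 = const (snd (snd qq))"

lemma PQ: "const p1 * Q1 + const p2 * Q2 + const p3 * Q3 = 1"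
proof -
  have "fst qq * p1 + fst (snd qq) * p2 + snd (snd qq) * p3 = 1"
    unfolding qq_def by (rule someI_ex) (use exists_q in auto)
  then show ?thesis unfolding Q1_def Q2_def Q3_def
    by (simp add: const_mult const_add algebra_simps)
qed

definition "gx = dX g"
definition "gy = dY g"
definition "gz = dZ g"
definition "eta = (Q2*gz - Q3*gy, Q3*gx - Q1*gz, Q1*gy - Q2*gx)"

lemma der_eta_g: "der eta g = 0"
  by (simp add: eta_def der3 gx_def gy_def gz_def algebra_simps)

lemma der_eta_f: "der eta f = g * der eta h"
  by (simp add: f_eq der_mult der_eta_g)

lemma Phi_XV: "Phi XV = 0" by (simp add: Phi3 algebra_simps)
lemma Phi_PV: "Phi PV = 0" by (simp add: Phi3 PV_def algebra_simps)

lemma Phi_eta: "Phi eta = of_nat m * g"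
proof -
  have "Phi eta = (const p1 * Q1 + const p2 * Q2 + const p3 * Q3) * (varX*gx + varY*gy + varZ*gz)
       - (const p1 * gx + const p2 * gy + const p3 * gz) * (varX*Q1 + varY*Q2 + varZ*Q3)"
    by (simp add: eta_def Phi3 algebra_simps)
  also have "varX*gx + varY*gy + varZ*gz = of_nat m * g"
    using der_XV_g by (simp add: der3 gx_def gy_def gz_def)
  also have "const p1 * gx + const p2 * gy + const p3 * gz = 0"
    using der_PV_g by (simp add: der3 PV_def gx_def gy_def gz_def)
  finally show ?thesis using PQ by simp
qed

definition "theta_a = tadd (tsmul h eta) (tsmul (- (const (1 / of_nat d) * der eta h)) XV)"
definition "theta_b = tadd (tsmul Ph eta) (tsmul (- der eta h) PV)"

lemma theta_a_AR: "der theta_a f = 0"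
proof -
  have "der theta_a f = h * (g * der eta h) - const (1 / of_nat d) * der eta h * (of_nat d * (g * h))"
    unfolding theta_a_def der_tadd der_tsmul der_eta_f der_XV_f by (simp add: f_eq)
  also have "\<dots> = h * (g * der eta h) - (of_nat d * const (1 / of_nat d)) * (der eta h * g * h)"
    by (simp add: algebra_simps)
  also have "\<dots> = 0" using d_const_inv by (simp add: algebra_simps)
  finally show ?thesis .
qed

lemma theta_b_AR: "der theta_b f = 0"
  unfolding theta_b_def der_tadd der_tsmul der_eta_f der_PV_f by (simp add: algebra_simps)

lemma Phi_theta_a: "Phi theta_a = h * (of_nat m * g)"
  unfolding theta_a_def Phi_tadd Phi_tsmul Phi_eta Phi_XV by simp

lemma Phi_theta_b: "Phi theta_b = Ph * (of_nat m * g)"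
  unfolding theta_b_def Phi_tadd Phi_tsmul Phi_eta Phi_PV by simp

lemma m_const_inv: "of_nat m * const (1 / of_nat m) = (1::S)"
  using m_ge2 const_inv[of "of_nat m"] by (simp add: of_nat_const)

lemma psi_unit:
  assumes "psi dvd h * of_nat m" "psi dvd Ph * of_nat m"
  shows "psi dvd 1"
proof -
  have "psi dvd h" using dvd_cancel_const[of psi h "of_nat m"] assms(1) m_ge2 by (simp add: of_nat_const)
  have "psi dvd Ph" using dvd_cancel_const[of psi Ph "of_nat m"] assms(2) m_ge2 by (simp add: of_nat_const)
  have "psi dvd 1 \<or> (\<exists>y\<in>set H. lin_poly y dvd psi)"
    using dvd_prodL_cases[OF nzH] \<open>psi dvd h\<close> unfolding h_def by blast
  moreover have "\<not> (\<exists>y\<in>set H. lin_poly y dvd psi)"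
    using H_not_dvd_Ph \<open>psi dvd Ph\<close> dvd_trans by blast
  ultimately show ?thesis by blast
qed

end


lemma tsmul_0[simp]: "tsmul 0 r = (0,0,0)" by (cases r) (simp add: tsmul_def)
lemma tsmul_1[simp]: "tsmul 1 r = r" by (cases r) (simp add: tsmul_def)
lemma tsmul_zv[simp]: "tsmul w (0,0,0) = (0,0,0)" by (simp add: tsmul_def)
lemma tadd_0l[simp]: "tadd (0,0,0) r = r" by (cases r) (simp add: tadd_def)
lemma tadd_0r[simp]: "tadd r (0,0,0) = r" by (cases r) (simp add: tadd_def)
lemma der_zv[simp]: "der (0,0,0) q = 0" by (simp add: der3)

context arr_pt begin

theorem part_i:
  assumes free: "is_free L d1 d2" and le: "d1 \<le> d2" and big: "d < 2*m"
  shows "m = d2 + 1"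
proof -
  have "\<exists>r1 r2. homog3 d1 r1 \<and> homog3 d2 r2 \<and> r1 \<in> AR f \<and> r2 \<in> AR f \<and>
       (\<forall>r\<in>AR f. \<exists>!pq. r = tadd (tsmul (fst pq) r1) (tsmul (snd pq) r2))"
    using free unfolding is_free_def Let_def .
  then obtain r1 r2 where hr1: "homog3 d1 r1" and hr2: "homog3 d2 r2" and a1': "r1 \<in> AR f" and a2': "r2 \<in> AR f"
    and uniq0: "\<forall>r\<in>AR f. \<exists>!pq. r = tadd (tsmul (fst pq) r1) (tsmul (snd pq) r2)"
    by (elim exE conjE) (rule that, assumption+)
  have a1: "der r1 f = 0" using a1' AR_iff by blast
  have a2: "der r2 f = 0" using a2' AR_iff by blast
  have uniq: "\<exists>!pq. r = tadd (tsmul (fst pq) r1) (tsmul (snd pq) r2)" if "der r f = 0" for r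
    using uniq0 that AR_iff by blast
  have rep: "\<exists>A B. r = tadd (tsmul A r1) (tsmul B r2)" if "der r f = 0" for r
    using uniq[OF that] by blast
  have indep: "A = 0 \<and> B = 0" if "tadd (tsmul A r1) (tsmul B r2) = (0,0,0)" for A B
  proof -
    have "\<exists>!pq. (0,0,0) = tadd (tsmul (fst pq) r1) (tsmul (snd pq) r2)" using uniq[of "(0,0,0)"] by simp
    moreover have "(0,0,0) = tadd (tsmul (fst (0::S,0::S)) r1) (tsmul (snd (0::S,0::S)) r2)" by simp
    moreover have "(0,0,0) = tadd (tsmul (fst (A,B)) r1) (tsmul (snd (A,B)) r2)" using that by simp
    ultimately have "(A,B) = (0,0)" by blast
    then show ?thesis by simp
  qed
  have r1nz: "r1 \<noteq> (0,0,0)"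
  proof
    assume "r1 = (0,0,0)"
    then have "tadd (tsmul 1 r1) (tsmul 0 r2) = (0,0,0)" by simp
    then show False using indep by fastforce
  qed
  define k0 where "k0 = d - m"
  have k0m: "k0 + 1 \<le> m" using big m_le unfolding k0_def by linarith
  have d1ge: "k0 \<le> d1"
  proof (rule ccontr)
    assume "\<not> k0 \<le> d1"
    then have "r1 = (0,0,0)" using small_zero[OF a1 hr1] k0m unfolding k0_def by linarith
    then show False using r1nz by simp
  qed
  obtain A B where th: "theta0 = tadd (tsmul A r1) (tsmul B r2)" using rep[OF theta0_AR] by blast
  have th2: "theta0 = tadd (tsmul (if d1 \<le> k0 then hc (k0 - d1) A else 0) r1) (tsmul (if d2 \<le> k0 then hc (k0 - d2) B else 0) r2)"
    using hc3_combo2[OF hr1 hr2, of k0 A B] homog3_theta0 th unfolding k0_def by simp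
  have d1le: "d1 \<le> k0"
  proof (rule ccontr)
    assume "\<not> d1 \<le> k0"
    then have "theta0 = (0,0,0)" using th2 le by simp
    then show False using theta0_nz by simp
  qed
  have d1eq: "d1 = k0" using d1ge d1le by simp
  have d2ge: "m \<le> d2 + 1"
  proof (rule ccontr)
    assume "\<not> m \<le> d2 + 1"
    then have s1: "d1 + 1 < m" "d2 + 1 < m" using le by auto
    obtain w1 where w1: "r1 = tsmul w1 theta0" using key[OF a1 Phi_small[OF a1 hr1 s1(1)]] by blast
    obtain w2 where w2: "r2 = tsmul w2 theta0" using key[OF a2 Phi_small[OF a2 hr2 s1(2)]] by blast
    have "tadd (tsmul w2 r1) (tsmul (- w1) r2) = (0,0,0)"
      by (simp add: w1 w2 tadd_def tsmul_def theta0_def algebra_simps)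
    then have "w1 = 0" using indep by fastforce
    then show False using r1nz w1 by simp
  qed
  have d2le: "d2 + 1 \<le> m"
  proof (cases "d1 = d2")
    case True then show ?thesis using d1eq k0m by simp
  next
    case False
    then have lt: "\<not> d2 \<le> k0" using le d1eq by simp
    define c where "c = hc 0 A"
    have thc: "theta0 = tsmul c r1" using th2 lt d1eq by (simp add: c_def)
    have "c * Phi r1 = 0" using Phi_theta0 thc Phi_tsmul by simp
    moreover have "c \<noteq> 0" using thc theta0_nz by auto
    ultimately have P1: "Phi r1 = 0" by simp
    obtain \<psi> where psi: "homog (d2 + 1 - m) \<psi>" "Phi r2 = \<psi> * g"
      using Phi_split[OF a2 hr2] d2ge by auto
    obtain A' B' where ta: "theta_a = tadd (tsmul A' r1) (tsmul B' r2)" using rep[OF theta_a_AR] by blast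
    obtain A'' B'' where tb: "theta_b = tadd (tsmul A'' r1) (tsmul B'' r2)" using rep[OF theta_b_AR] by blast
    have "g * (h * of_nat m) = g * (B' * \<psi>)"
      using arg_cong[OF ta, of Phi] unfolding Phi_tadd Phi_tsmul Phi_theta_a P1 psi(2) by (simp add: algebra_simps)
    then have "h * of_nat m = B' * \<psi>" using S_cancel g_nz by blast
    then have da: "\<psi> dvd h * of_nat m" by simp
    have "g * (Ph * of_nat m) = g * (B'' * \<psi>)"
      using arg_cong[OF tb, of Phi] unfolding Phi_tadd Phi_tsmul Phi_theta_b P1 psi(2) by (simp add: algebra_simps)
    then have "Ph * of_nat m = B'' * \<psi>" using S_cancel g_nz by blast
    then have db: "\<psi> dvd Ph * of_nat m" by simp
    have "\<psi> dvd 1" using psi_unit[OF da db] .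
    then obtain v where "1 = \<psi> * v" by (auto elim: dvdE)
    then have "d2 + 1 - m = 0" using homog_unit_deg[OF psi(1)] by simp
    then show ?thesis by simp
  qed
  show ?thesis using d2ge d2le by simp
qed

theorem part_ii:
  assumes nf: "is_nearly_free L d1 d2" and le: "d1 \<le> d2" and big: "d \<le> 2*m"
  shows "m = d2"
proof -
  have dsum: "d1 + d2 = d" using nf by (simp add: is_nearly_free_def d_def)
  have "\<exists>r1 r2 r3. homog3 d1 r1 \<and> homog3 d2 r2 \<and> homog3 d2 r3 \<and>
       r1 \<in> AR f \<and> r2 \<in> AR f \<and> r3 \<in> AR f \<and>
       (\<forall>r\<in>AR f. \<exists>p q s. r = tadd (tsmul p r1) (tadd (tsmul q r2) (tsmul s r3))) \<and>
       (\<exists>u v w. homog (d2 + 1 - d1) u \<and> homog 1 v \<and> homog 1 w \<and>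
          (\<forall>p q s. tadd (tsmul p r1) (tadd (tsmul q r2) (tsmul s r3)) = (0,0,0) \<longleftrightarrow>
                     (\<exists>h. (p,q,s) = (h*u, h*v, h*w))) \<and>
          (\<forall>h h'. (h*u, h*v, h*w) = (h'*u, h'*v, h'*w) \<longrightarrow> h = h'))"
    using nf unfolding is_nearly_free_def Let_def by (rule conjunct2)
  then obtain r1 r2 r3 where RR: "homog3 d1 r1 \<and> homog3 d2 r2 \<and> homog3 d2 r3 \<and>
       r1 \<in> AR f \<and> r2 \<in> AR f \<and> r3 \<in> AR f \<and>
       (\<forall>r\<in>AR f. \<exists>p q s. r = tadd (tsmul p r1) (tadd (tsmul q r2) (tsmul s r3))) \<and>
       (\<exists>u v w. homog (d2 + 1 - d1) u \<and> homog 1 v \<and> homog 1 w \<and>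
          (\<forall>p q s. tadd (tsmul p r1) (tadd (tsmul q r2) (tsmul s r3)) = (0,0,0) \<longleftrightarrow>
                     (\<exists>h. (p,q,s) = (h*u, h*v, h*w))) \<and>
          (\<forall>h h'. (h*u, h*v, h*w) = (h'*u, h'*v, h'*w) \<longrightarrow> h = h'))"
    by (elim exE) (erule that)
  have hr1: "homog3 d1 r1" using RR by simp
  have hr2: "homog3 d2 r2" using RR by simp
  have hr3: "homog3 d2 r3" using RR by simp
  have a1': "r1 \<in> AR f" using RR by simp
  have gen0: "\<forall>r\<in>AR f. \<exists>p q s. r = tadd (tsmul p r1) (tadd (tsmul q r2) (tsmul s r3))" using RR by simp
  have "\<exists>u v w. homog (d2 + 1 - d1) u \<and> homog 1 v \<and> homog 1 w \<and>
          (\<forall>p q s. tadd (tsmul p r1) (tadd (tsmul q r2) (tsmul s r3)) = (0,0,0) \<longleftrightarrow>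
                     (\<exists>h. (p,q,s) = (h*u, h*v, h*w))) \<and>
          (\<forall>h h'. (h*u, h*v, h*w) = (h'*u, h'*v, h'*w) \<longrightarrow> h = h')" using RR by simp
  then obtain u v w where UU: "homog (d2 + 1 - d1) u \<and> homog 1 v \<and> homog 1 w \<and>
          (\<forall>p q s. tadd (tsmul p r1) (tadd (tsmul q r2) (tsmul s r3)) = (0,0,0) \<longleftrightarrow>
                     (\<exists>h. (p,q,s) = (h*u, h*v, h*w))) \<and>
          (\<forall>h h'. (h*u, h*v, h*w) = (h'*u, h'*v, h'*w) \<longrightarrow> h = h')"
    by (elim exE) (erule that)
  have hu: "homog (d2 + 1 - d1) u" using UU by simp
  have rel0: "\<forall>p q s. tadd (tsmul p r1) (tadd (tsmul q r2) (tsmul s r3)) = (0,0,0) \<longleftrightarrow>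
                     (\<exists>h. (p,q,s) = (h*u, h*v, h*w))" using UU by blast
  have a1: "der r1 f = 0" using a1' AR_iff by blast
  have gen: "\<exists>A B C. r = tadd (tsmul A r1) (tadd (tsmul B r2) (tsmul C r3))" if "der r f = 0" for r
    using gen0 that AR_iff by blast
  have rel: "tadd (tsmul A r1) (tadd (tsmul B r2) (tsmul C r3)) = (0,0,0) \<longleftrightarrow>
                     (\<exists>hh. (A,B,C) = (hh*u, hh*v, hh*w))" for A B C
    using rel0 by blast
  have r1nz: "r1 \<noteq> (0,0,0)"
  proof
    assume "r1 = (0,0,0)"
    then have "tadd (tsmul 1 r1) (tadd (tsmul 0 r2) (tsmul 0 r3)) = (0,0,0)" by simp
    then obtain hh where "(1::S, 0::S, 0::S) = (hh*u, hh*v, hh*w)" using rel by blast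
    then have "u * hh = 1" by (simp add: mult.commute)
    then have "d2 + 1 - d1 = 0" using homog_unit_deg[OF hu] by simp
    then show False using le by simp
  qed
  define k0 where "k0 = d - m"
  have k0m: "k0 \<le> m" using big m_le unfolding k0_def by linarith
  have nosmall: "\<not> (d1 < k0 \<and> d1 + 1 < m)"
  proof
    assume "d1 < k0 \<and> d1 + 1 < m"
    then have "r1 = (0,0,0)" using small_zero[OF a1 hr1] unfolding k0_def by blast
    then show False using r1nz by simp
  qed
  obtain A B C where th: "theta0 = tadd (tsmul A r1) (tadd (tsmul B r2) (tsmul C r3))" using gen[OF theta0_AR] by blast
  have th3: "theta0 = tadd (tsmul (if d1 \<le> k0 then hc (k0 - d1) A else 0) r1)
     (tadd (tsmul (if d2 \<le> k0 then hc (k0 - d2) B else 0) r2) (tsmul (if d2 \<le> k0 then hc (k0 - d2) C else 0) r3))"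
    using hc3_combo3[OF hr1 hr2 hr3, of k0 A B C] homog3_theta0 th unfolding k0_def by simp
  have d1le: "d1 \<le> k0"
  proof (rule ccontr)
    assume "\<not> d1 \<le> k0"
    then have "theta0 = (0,0,0)" using th3 le by simp
    then show False using theta0_nz by simp
  qed
  show ?thesis
  proof (cases "d < 2*m")
    case True
    then have "k0 + 1 \<le> m" using m_le unfolding k0_def by linarith
    then have "d1 = k0" using nosmall d1le by linarith
    then show ?thesis using dsum m_le unfolding k0_def by linarith
  next
    case False
    then have dm: "d = 2*m" using big by simp
    then have k0eq: "k0 = m" unfolding k0_def by simp
    have "m \<le> d1 + 1" using nosmall d1le k0eq by linarith
    then consider "d1 = m" | "d1 + 1 = m" using d1le k0eq by linarith
    then show ?thesis
    proof cases
      case 1 then show ?thesis using dsum dm by simp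
    next
      case 2
      then have d2eq: "d2 = m + 1" using dsum dm by simp
      define c where "c = hc (k0 - d1) A"
      have thc: "theta0 = tsmul c r1" using th3 d2eq k0eq 2 by (simp add: c_def)
      have "c * Phi r1 = 0" using Phi_theta0 thc Phi_tsmul by simp
      moreover have "c \<noteq> 0" using thc theta0_nz by auto
      ultimately have P1: "Phi r1 = 0" by simp
      have "r1 = (0,0,0)" using key_small[OF a1 P1 hr1] 2 k0eq unfolding k0_def by simp
      then show ?thesis using r1nz by simp
    qed
  qed
qed

end

theorem corollary2p3:
  fixes L :: "lform list" and p :: lform and d d1 d2 m :: nat
  assumes "arrangement L" and "d = length L"
    and "intersection_point L p" and "m = mult_pt L p"
  shows "(is_free L d1 d2 \<and> d1 \<le> d2 \<and> real m > real d / 2 \<longrightarrow> m = d2 + 1) \<and>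
         (is_nearly_free L d1 d2 \<and> d1 \<le> d2 \<and> real m \<ge> real d / 2 \<longrightarrow> m = d2)"
proof -
  obtain p1 p2 p3 where p: "p = (p1,p2,p3)" by (cases p) auto
  interpret A: arr_pt L p1 p2 p3
    using assms(1,3) p by unfold_locales (auto simp: intersection_point_def)
  have mm: "m = A.m" using A.m_eq assms(4) p by simp
  have dd: "d = A.d" using assms(2) by (simp add: A.d_def)
  show ?thesis
  proof (intro conjI impI)
    assume "is_free L d1 d2 \<and> d1 \<le> d2 \<and> real m > real d / 2"
    then show "m = d2 + 1" using A.part_i[of d1 d2] mm dd by auto
  next
    assume "is_nearly_free L d1 d2 \<and> d1 \<le> d2 \<and> real m \<ge> real d / 2"
    then show "m = d2" using A.part_ii[of d1 d2] mm dd by auto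
  qed
qed


end
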